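(* Consider either the IV model given by exclusion, random assignment and consistency, or the IV model given by exclusion, joint independence and outcome consistency. Let $F\subset\mathbb R^{2\ell n}$ be a finite set such that $L(\mathcal P)=\max_{\mathbf f\in F}\mathbf f^\top\mathbf p$ for every observed law $\mathcal P$ compatible with the model (or such that $U(\mathcal P)=\min_{\mathbf f\in F}\mathbf f^\top\mathbf p$ for every compatible $\mathcal P$). Then $|F|\ge \ell\big((\ell-1)^{n-1}-(\ell-1)\big)$.
   Context: $D\in\{0,1\}$ treatment; $Y$ outcome with values $\gamma_0<\dots<\gamma_{n-1}$; instrument $Z$ with values in $[\ell]=\{0,\dots,\ell-1\}$; $[n]=\{0,\dots,n-1\}$. Potential outcomes $Y^{(d,z)}$, potential treatments $D^{(z)}$. Exclusion: $Y^{(d,z)}=Y^{(d,z')}$ a.s. for all $z,z',d$ (written $Y^{(d)}$). Random assignment: $Z\perp(Y^{(0)},Y^{(1)},D^{(0)},\dots,D^{(\ell-1)})$. Joint independence: $Z\perp(Y^{(0)},Y^{(1)})$. Consistency: $Y=(1-D)Y^{(0)}+DY^{(1)}$ and $D=\sum_z\mathbb 1(Z=z)D^{(z)}$; outcome consistency is only the first of these. An observed law $\mathcal P$ of $(Y,D,Z)$ (with $\mathcal P(Z=z)>0$ for all $z$) is compatible with a model if it is induced by a joint law of potential outcomes (and potential treatments, resp. $D$) and $Z$ satisfying the model's assumptions. $\mathbf p\in\mathbb R^{2\ell n}$ has entries $p_{yd,z}=\mathcal P(Y=\gamma_y,D=d\mid Z=z)$ and $\mathbf f^\top\mathbf p=\sum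 f_{yd,z}p_{yd,z}$. $L(\mathcal P)$, $U(\mathcal P)$ are the infimum and supremum of $\mathbb E[Y^{(1)}-Y^{(0)}]$ over laws satisfying the model that induce $\mathcal P$. *)

theory Defs
  imports "HOL-Probability.Probability"
begin

text \<open>Outcome values are gamma 0 < ... < gamma (n-1); treatment D in {0,1} (as nat);
  instrument Z in {0..<l}.
  Potential outcomes Y^(d,z) are stored as Yp d z (for d < 2, z < l);
  potential treatments D^(z) as Dp z.  Under exclusion Y^(d) is Yp d 0.\<close>

type_synonym obs = "real \<times> nat \<times> nat"

type_synonym world_ra = "obs \<times> (nat \<Rightarrow> nat \<Rightarrow> real) \<times> (nat \<Rightarrow> nat)"

type_synonym world_ji = "obs \<times> (nat \<Rightarrow> nat \<Rightarrow> real)"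

datatype iv_model = RandomAssignment | JointIndependence

text \<open>Independence of two discrete random variables on a pmf (elementary definition;
  for discrete random variables this is ordinary stochastic independence).\<close>
definition indep_discrete :: "'w pmf \<Rightarrow> ('w \<Rightarrow> 'a) \<Rightarrow> ('w \<Rightarrow> 'b) \<Rightarrow> bool" where
  "indep_discrete \<omega> X W \<longleftrightarrow>
     (\<forall>a b. measure_pmf.prob \<omega> {w. X w = a \<and> W w = b}
            = measure_pmf.prob \<omega> {w. X w = a} * measure_pmf.prob \<omega> {w. W w = b})"

definition obsZ :: "obs \<Rightarrow> nat" where
  "obsZ o' = snd (snd o')"

definition ra_law :: "(nat \<Rightarrow> real) \<Rightarrow> nat \<Rightarrow> nat \<Rightarrow> world_ra pmf \<Rightarrow> bool" where
  "ra_law \<gamma> n l \<omega> \<longleftrightarrow>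
     (\<forall>w\<in>set_pmf \<omega>. case w of ((Y, D, Z), Yp, Dp) \<Rightarrow>
        Z < l
      \<and> (\<forall>d<2. \<forall>z<l. Yp d z \<in> \<gamma> ` {..<n})
      \<and> (\<forall>z<l. Dp z \<in> {0, 1})
      \<and> (\<forall>d<2. \<forall>z<l. \<forall>z'<l. Yp d z = Yp d z')
      \<and> Y = (1 - real D) * Yp 0 0 + real D * Yp 1 0
      \<and> D = (\<Sum>z<l. (if Z = z then 1 else 0) * Dp z))
   \<and> indep_discrete \<omega> (\<lambda>w. obsZ (fst w))
       (\<lambda>w. (fst (snd w) 0 0, fst (snd w) 1 0, map (snd (snd w)) [0..<l]))"

definition ji_law :: "(nat \<Rightarrow> real) \<Rightarrow> nat \<Rightarrow> nat \<Rightarrow> world_ji pmf \<Rightarrow> bool" where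
  "ji_law \<gamma> n l \<omega> \<longleftrightarrow>
     (\<forall>w\<in>set_pmf \<omega>. case w of ((Y, D, Z), Yp) \<Rightarrow>
        Z < l
      \<and> D \<in> {0, 1}
      \<and> (\<forall>d<2. \<forall>z<l. Yp d z \<in> \<gamma> ` {..<n})
      \<and> (\<forall>d<2. \<forall>z<l. \<forall>z'<l. Yp d z = Yp d z')
      \<and> Y = (1 - real D) * Yp 0 0 + real D * Yp 1 0)
   \<and> indep_discrete \<omega> (\<lambda>w. obsZ (fst w))
       (\<lambda>w. (snd w 0 0, snd w 1 0))"

definition ate_set :: "iv_model \<Rightarrow> (nat \<Rightarrow> real) \<Rightarrow> nat \<Rightarrow> nat \<Rightarrow> obs pmf \<Rightarrow> real set" where
  "ate_set m \<gamma> n l P =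
     (case m of
        RandomAssignment \<Rightarrow>
          {measure_pmf.expectation \<omega> (\<lambda>w. fst (snd w) 1 0 - fst (snd w) 0 0) | \<omega>.
             ra_law \<gamma> n l \<omega> \<and> map_pmf fst \<omega> = P}
      | JointIndependence \<Rightarrow>
          {measure_pmf.expectation \<omega> (\<lambda>w. snd w 1 0 - snd w 0 0) | \<omega>.
             ji_law \<gamma> n l \<omega> \<and> map_pmf fst \<omega> = P})"

definition compatible :: "iv_model \<Rightarrow> (nat \<Rightarrow> real) \<Rightarrow> nat \<Rightarrow> nat \<Rightarrow> obs pmf \<Rightarrow> bool" where
  "compatible m \<gamma> n l P \<longleftrightarrow>
     (\<forall>z<l. measure_pmf.prob P {o'. obsZ o' = z} > 0) \<and> ate_set m \<gamma> n l P \<noteq> {}"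

definition lower_bound :: "iv_model \<Rightarrow> (nat \<Rightarrow> real) \<Rightarrow> nat \<Rightarrow> nat \<Rightarrow> obs pmf \<Rightarrow> real" where
  "lower_bound m \<gamma> n l P = Inf (ate_set m \<gamma> n l P)"

definition upper_bound :: "iv_model \<Rightarrow> (nat \<Rightarrow> real) \<Rightarrow> nat \<Rightarrow> nat \<Rightarrow> obs pmf \<Rightarrow> real" where
  "upper_bound m \<gamma> n l P = Sup (ate_set m \<gamma> n l P)"

text \<open>Coordinates (y, d, z) of R^(2 l n).\<close>
definition coords :: "nat \<Rightarrow> nat \<Rightarrow> (nat \<times> nat \<times> nat) set" where
  "coords n l = {..<n} \<times> {..<2} \<times> {..<l}"

definition coord_space :: "nat \<Rightarrow> nat \<Rightarrow> (nat \<times> nat \<times> nat \<Rightarrow> real) set" where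
  "coord_space n l = {f. \<forall>k. k \<notin> coords n l \<longrightarrow> f k = 0}"

definition pvec :: "(nat \<Rightarrow> real) \<Rightarrow> obs pmf \<Rightarrow> nat \<times> nat \<times> nat \<Rightarrow> real" where
  "pvec \<gamma> P k = (case k of (y, d, z) \<Rightarrow>
      measure_pmf.prob P {(\<gamma> y, d, z)} / measure_pmf.prob P {o'. obsZ o' = z})"

definition fdot :: "(nat \<Rightarrow> real) \<Rightarrow> nat \<Rightarrow> nat \<Rightarrow> (nat \<times> nat \<times> nat \<Rightarrow> real) \<Rightarrow> obs pmf \<Rightarrow> real" where
  "fdot \<gamma> n l f P = (\<Sum>k\<in>coords n l. f k * pvec \<gamma> P k)"

end

theory Submission
  imports Defs
begin


definition vz :: "nat \<times> nat \<times> nat set \<Rightarrow> nat \<Rightarrow> nat" where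
  "vz t z = (case t of (a, b, S) \<Rightarrow> if z \<in> S then b else a)"
definition dz :: "nat \<times> nat \<times> nat set \<Rightarrow> nat \<Rightarrow> nat" where
  "dz t z = (case t of (a, b, S) \<Rightarrow> if z \<in> S then 1 else 0)"
definition Rs :: "(nat \<times> nat \<times> nat \<Rightarrow> real) \<Rightarrow> nat \<Rightarrow> nat \<times> nat \<times> nat set \<Rightarrow> real" where
  "Rs f l t = (\<Sum>z<l. f (vz t z, dz t z, z))"
definition kap :: "(nat \<Rightarrow> real) \<Rightarrow> nat \<times> nat \<times> nat set \<Rightarrow> real" where
  "kap \<gamma> t = (case t of (a, b, S) \<Rightarrow> \<gamma> b - \<gamma> a)"
definition bw :: "(nat \<Rightarrow> real) \<Rightarrow> (nat \<times> nat \<times> nat set) list \<Rightarrow> nat \<times> nat \<Rightarrow> world_ra" where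
  "bw \<gamma> xs zk = (case zk of (z, k) \<Rightarrow>
     ((\<gamma> (vz (xs!k) z), dz (xs!k) z, z),
      (\<lambda>d _. if d = 0 then \<gamma> (fst (xs!k)) else \<gamma> (fst (snd (xs!k)))),
      (\<lambda>z. dz (xs!k) z)))"
definition om :: "(nat \<Rightarrow> real) \<Rightarrow> nat \<Rightarrow> (nat \<times> nat \<times> nat set) list \<Rightarrow> world_ra pmf" where
  "om \<gamma> l xs = map_pmf (bw \<gamma> xs) (pair_pmf (pmf_of_set {..<l}) (pmf_of_set {..<length xs}))"
definition Pof :: "(nat \<Rightarrow> real) \<Rightarrow> nat \<Rightarrow> (nat \<times> nat \<times> nat set) list \<Rightarrow> obs pmf" where
  "Pof \<gamma> l xs = map_pmf fst (om \<gamma> l xs)"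

lemma indep_map:
  "indep_discrete (map_pmf h \<omega>) X W \<longleftrightarrow> indep_discrete \<omega> (\<lambda>x. X (h x)) (\<lambda>x. W (h x))"
  unfolding indep_discrete_def by (simp add: vimage_def)

lemma indep_pair:
  fixes A :: "nat pmf" and B :: "nat pmf"
  shows "indep_discrete (pair_pmf A B) (\<lambda>x. gA (fst x)) (\<lambda>x. gB (snd x))"
  unfolding indep_discrete_def
proof (intro allI)
  fix a b
  have e1: "{w. gA (fst w) = a \<and> gB (snd w) = b} = {x. gA x = a} \<times> {y. gB y = b}" by auto
  have e2: "{w. gA (fst w) = a} = {x. gA x = a} \<times> UNIV" by auto
  have e3: "{w. gB (snd w) = b} = UNIV \<times> {y. gB y = b}" by auto
  show "measure_pmf.prob (pair_pmf A B) {w. gA (fst w) = a \<and> gB (snd w) = b} =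
        measure_pmf.prob (pair_pmf A B) {w. gA (fst w) = a} * measure_pmf.prob (pair_pmf A B) {w. gB (snd w) = b}"
    unfolding e1 e2 e3 by (simp add: measure_pmf_prob_product)
qed

lemma sum_if_eq: "(z::nat) < l \<Longrightarrow> (\<Sum>z'<l. (if z = z' then 1 else 0) * (h z' :: nat)) = h z"
proof -
  assume "z < l"
  have "(\<Sum>z'<l. (if z = z' then 1 else 0) * h z') = (\<Sum>z'<l. if z = z' then h z' else 0)"
    by (intro sum.cong) auto
  also have "\<dots> = h z" using \<open>z < l\<close> by (simp add: sum.delta)
  finally show ?thesis .
qed

lemma om_ra:
  assumes l: "l > 0" and ne: "xs \<noteq> []" and bd: "\<forall>t\<in>set xs. fst t < n \<and> fst (snd t) < n"
  shows "ra_law \<gamma> n l (om \<gamma> l xs)"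
  unfolding ra_law_def
proof
  show "\<forall>w\<in>set_pmf (om \<gamma> l xs). case w of ((Y, D, Z), Yp, Dp) \<Rightarrow>
        Z < l
      \<and> (\<forall>d<2. \<forall>z<l. Yp d z \<in> \<gamma> ` {..<n})
      \<and> (\<forall>z<l. Dp z \<in> {0, 1})
      \<and> (\<forall>d<2. \<forall>z<l. \<forall>z'<l. Yp d z = Yp d z')
      \<and> Y = (1 - real D) * Yp 0 0 + real D * Yp 1 0
      \<and> D = (\<Sum>z<l. (if Z = z then 1 else 0) * Dp z)"
  proof
    fix w assume "w \<in> set_pmf (om \<gamma> l xs)"
    then obtain z k where zk: "z < l" "k < length xs" and w: "w = bw \<gamma> xs (z, k)"
    proof -
      have "{..<l} \<noteq> {}" "{..<length xs} \<noteq> {}" using l ne by auto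
      then show ?thesis using \<open>w \<in> set_pmf (om \<gamma> l xs)\<close> that unfolding om_def
        by (auto simp: set_pmf_of_set)
    qed
    obtain a b S where t: "xs ! k = (a, b, S)" by (metis prod_cases3)
    have ab: "a < n" "b < n" using bd zk(2) t by (metis fst_conv nth_mem snd_conv)+
    show "case w of ((Y, D, Z), Yp, Dp) \<Rightarrow>
        Z < l
      \<and> (\<forall>d<2. \<forall>z<l. Yp d z \<in> \<gamma> ` {..<n})
      \<and> (\<forall>z<l. Dp z \<in> {0, 1})
      \<and> (\<forall>d<2. \<forall>z<l. \<forall>z'<l. Yp d z = Yp d z')
      \<and> Y = (1 - real D) * Yp 0 0 + real D * Yp 1 0
      \<and> D = (\<Sum>z<l. (if Z = z then 1 else 0) * Dp z)"
      using zk ab unfolding w bw_def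
      by (auto simp: t vz_def dz_def sum_if_eq[OF zk(1)])
  qed
next
  show "indep_discrete (om \<gamma> l xs) (\<lambda>w. obsZ (fst w))
       (\<lambda>w. (fst (snd w) 0 0, fst (snd w) 1 0, map (snd (snd w)) [0..<l]))"
    unfolding om_def indep_map
    using indep_pair[where gA="\<lambda>z. z" and gB="\<lambda>k. (\<gamma> (fst (xs!k)), \<gamma> (fst (snd (xs!k))), map (\<lambda>z. dz (xs!k) z) [0..<l])"
        and A="pmf_of_set {..<l}" and B="pmf_of_set {..<length xs}"]
    by (simp add: bw_def obsZ_def case_prod_beta)
qed

lemma sum_list_nth_eq: "sum_list (map g xs) = (\<Sum>k<length xs. g (xs ! k))"
  by (simp add: sum_list_sum_nth atLeast0LessThan)

lemma om_ate:
  assumes l: "l > 0" and ne: "xs \<noteq> []"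
  shows "measure_pmf.expectation (om \<gamma> l xs) (\<lambda>w. fst (snd w) 1 0 - fst (snd w) 0 0)
         = sum_list (map (kap \<gamma>) xs) / length xs"
proof -
  have eq: "(\<lambda>x. fst (snd (bw \<gamma> xs x)) 1 0 - fst (snd (bw \<gamma> xs x)) 0 0) = (\<lambda>x. kap \<gamma> (xs ! snd x))"
    by (auto simp: bw_def kap_def fun_eq_iff split: prod.split)
  have "measure_pmf.expectation (om \<gamma> l xs) (\<lambda>w. fst (snd w) 1 0 - fst (snd w) 0 0)
      = measure_pmf.expectation (pair_pmf (pmf_of_set {..<l}) (pmf_of_set {..<length xs})) (\<lambda>x. kap \<gamma> (xs ! snd x))"
    unfolding om_def integral_map_pmf eq ..
  also have "\<dots> = measure_pmf.expectation (pmf_of_set {..<length xs}) (\<lambda>k. kap \<gamma> (xs ! k))"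
    by (rule expectation_pair_pmf_snd)
  also have "\<dots> = (\<Sum>k<length xs. kap \<gamma> (xs ! k)) / length xs"
    using ne by (subst integral_pmf_of_set) auto
  finally show ?thesis by (simp add: sum_list_nth_eq)
qed

lemma Pof_Z:
  assumes l: "l > 0" and ne: "xs \<noteq> []" and z: "z < l"
  shows "measure_pmf.prob (Pof \<gamma> l xs) {o'. obsZ o' = z} = 1 / l"
proof -
  have "bw \<gamma> xs -` (fst -` {o'. obsZ o' = z}) = {z} \<times> UNIV"
    by (auto simp: bw_def obsZ_def split: prod.split)
  then have "measure_pmf.prob (Pof \<gamma> l xs) {o'. obsZ o' = z}
     = measure_pmf.prob (pair_pmf (pmf_of_set {..<l}) (pmf_of_set {..<length xs})) ({z} \<times> UNIV)"
    unfolding Pof_def om_def by (simp add: vimage_comp)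
  also have "\<dots> = 1 / l"
  proof -
    have "{..<l} \<noteq> {}" "{..<length xs} \<noteq> {}" using l ne by auto
    then show ?thesis using z
      by (simp add: measure_pmf_prob_product measure_pmf_single measure_pmf_of_set)
  qed
  finally show ?thesis .
qed

lemma dz_lt: "dz t z < 2"
  by (auto simp: dz_def split: prod.split)

lemma vz_lt: "fst t < n \<Longrightarrow> fst (snd t) < n \<Longrightarrow> vz t z < n"
  by (auto simp: vz_def split: prod.split)

lemma card_sum_if: "finite A \<Longrightarrow> real (card {k \<in> A. P k}) = (\<Sum>k\<in>A. if P k then 1 else 0)"
  by (simp add: sum.If_cases Int_def)

lemma card_sum_if': "real (card {k. k < (N::nat) \<and> P k}) = (\<Sum>k<N. if P k then 1 else 0)"
proof -
  have "{k. k < N \<and> P k} = {k \<in> {..<N}. P k}" by auto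
  then show ?thesis using card_sum_if[of "{..<N}" P] by simp
qed

lemma coords_delta:
  assumes "\<And>z. vz t z < n"
  shows "(\<Sum>x\<in>coords n l. f x * (case x of (y, d, z) \<Rightarrow> if vz t z = y \<and> dz t z = d then 1 else 0)) = Rs f l t"
proof -
  let ?T = "(\<lambda>z. (vz t z, dz t z, z)) ` {..<l}"
  have T: "?T \<subseteq> coords n l" using assms by (auto simp: coords_def dz_lt)
  have "(\<Sum>x\<in>coords n l. f x * (case x of (y, d, z) \<Rightarrow> if vz t z = y \<and> dz t z = d then 1 else 0))
      = (\<Sum>x\<in>coords n l. if x \<in> ?T then f x else 0)"
  proof (intro sum.cong refl)
    fix x assume "x \<in> coords n l"
    then obtain y d z where x: "x = (y, d, z)" and z: "z < l" by (cases x) (auto simp: coords_def)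
    show "f x * (case x of (y, d, z) \<Rightarrow> if vz t z = y \<and> dz t z = d then 1 else 0) = (if x \<in> ?T then f x else 0)"
    proof (cases "vz t z = y \<and> dz t z = d")
      case True
      then have "x \<in> ?T" using z unfolding x by (auto intro!: rev_image_eqI[of z])
      then show ?thesis using True x by simp
    next
      case False
      then have "x \<notin> ?T" unfolding x by auto
      then show ?thesis using False unfolding x by auto
    qed
  qed
  also have "\<dots> = sum f (coords n l \<inter> ?T)"
    by (simp add: sum.If_cases coords_def Int_commute)
  also have "coords n l \<inter> ?T = ?T" using T by blast
  also have "sum f ?T = (\<Sum>z<l. f (vz t z, dz t z, z))"
    by (subst sum.reindex) (auto simp: inj_on_def)
  finally show ?thesis unfolding Rs_def .
qed

lemma Pof_point:
  assumes l: "l > 0" and ne: "xs \<noteq> []" and inj: "inj_on \<gamma> {..<n}"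
    and bd: "\<forall>t\<in>set xs. fst t < n \<and> fst (snd t) < n" and z: "z < l" and y: "y < n"
  shows "measure_pmf.prob (Pof \<gamma> l xs) {(\<gamma> y, d, z)}
     = (1 / l) * (card {k \<in> {..<length xs}. vz (xs!k) z = y \<and> dz (xs!k) z = d} / length xs)"
proof -
  have "bw \<gamma> xs -` (fst -` {(\<gamma> y, d, z)}) = {z} \<times> {k. \<gamma> (vz (xs!k) z) = \<gamma> y \<and> dz (xs!k) z = d}"
    by (auto simp: bw_def split: prod.split)
  then have "measure_pmf.prob (Pof \<gamma> l xs) {(\<gamma> y, d, z)}
     = measure_pmf.prob (pair_pmf (pmf_of_set {..<l}) (pmf_of_set {..<length xs}))
         ({z} \<times> {k. \<gamma> (vz (xs!k) z) = \<gamma> y \<and> dz (xs!k) z = d})"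
    unfolding Pof_def om_def by (simp add: vimage_comp)
  also have "\<dots> = (1 / l) * (card ({..<length xs} \<inter> {k. \<gamma> (vz (xs!k) z) = \<gamma> y \<and> dz (xs!k) z = d}) / length xs)"
  proof -
    have "{..<l} \<noteq> {}" "{..<length xs} \<noteq> {}" using l ne by auto
    then show ?thesis using z
      by (simp add: measure_pmf_prob_product measure_pmf_single measure_pmf_of_set)
  qed
  also have "{..<length xs} \<inter> {k. \<gamma> (vz (xs!k) z) = \<gamma> y \<and> dz (xs!k) z = d}
      = {k \<in> {..<length xs}. vz (xs!k) z = y \<and> dz (xs!k) z = d}"
  proof -
    have "\<And>k. k < length xs \<Longrightarrow> vz (xs!k) z < n"
      using bd by (intro vz_lt) (auto dest: nth_mem)
    then show ?thesis using inj y by (auto dest: inj_onD)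
  qed
  finally show ?thesis .
qed

lemma fdot_Pof:
  assumes l: "l > 0" and ne: "xs \<noteq> []" and inj: "inj_on \<gamma> {..<n}"
    and bd: "\<forall>t\<in>set xs. fst t < n \<and> fst (snd t) < n"
  shows "fdot \<gamma> n l f (Pof \<gamma> l xs) = sum_list (map (Rs f l) xs) / length xs"
proof -
  have vb: "\<And>k z. k < length xs \<Longrightarrow> vz (xs!k) z < n"
    using bd by (intro vz_lt) (auto dest: nth_mem)
  have pv: "pvec \<gamma> (Pof \<gamma> l xs) x = (\<Sum>k<length xs. (case x of (y, d, z) \<Rightarrow> if vz (xs!k) z = y \<and> dz (xs!k) z = d then 1 else 0)) / length xs"
    if xin: "x \<in> coords n l" for x
  proof -
    obtain y d z where x: "x = (y, d, z)" and yz: "y < n" "z < l" using xin by (cases x) (auto simp: coords_def)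
    have lp: "real l > 0" using l by simp
    show ?thesis unfolding x pvec_def
      using Pof_point[OF l ne inj bd yz(2) yz(1), of d] Pof_Z[OF l ne yz(2), of \<gamma>] lp
      by (simp add: card_sum_if')
  qed
  have "fdot \<gamma> n l f (Pof \<gamma> l xs)
     = (\<Sum>x\<in>coords n l. f x * ((\<Sum>k<length xs. (case x of (y, d, z) \<Rightarrow> if vz (xs!k) z = y \<and> dz (xs!k) z = d then 1 else 0)) / length xs))"
    unfolding fdot_def by (intro sum.cong refl) (simp add: pv)
  also have "\<dots> = (\<Sum>k<length xs. (\<Sum>x\<in>coords n l. f x * (case x of (y, d, z) \<Rightarrow> if vz (xs!k) z = y \<and> dz (xs!k) z = d then 1 else 0))) / length xs"
    by (simp add: sum_divide_distrib sum_distrib_left sum.swap[of _ "coords n l"])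
  also have "\<dots> = (\<Sum>k<length xs. Rs f l (xs!k)) / length xs"
    by (intro arg_cong2[where f="(/)"] sum.cong refl coords_delta) (simp add: vb)
  finally show ?thesis by (simp add: sum_list_nth_eq)
qed

lemma prob_cong_supp:
  assumes "\<forall>w\<in>set_pmf \<omega>. w \<in> B \<longleftrightarrow> w \<in> B'"
  shows "measure_pmf.prob \<omega> B = measure_pmf.prob \<omega> B'"
proof -
  have "B \<inter> set_pmf \<omega> = B' \<inter> set_pmf \<omega>" using assms by auto
  then show ?thesis by (metis measure_Int_set_pmf)
qed

lemma sum4:
  fixes l n m k :: nat
  shows
  "(\<Sum>u\<in>{..<l} \<times> {..<n} \<times> {..<m} \<times> {..<k}. h u) =
   (\<Sum>z<l. \<Sum>a<n. \<Sum>b<m. \<Sum>d<k. h (z, a, b, d))"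
  by (simp add: sum.cartesian_product)

lemma prob_fin4:
  fixes l n m k :: nat
  assumes "set_pmf \<mu> \<subseteq> {..<l} \<times> {..<n} \<times> {..<m} \<times> {..<k}"
  shows "measure_pmf.prob \<mu> B = (\<Sum>z<l. \<Sum>a<n. \<Sum>b<m. \<Sum>d<k. if (z, a, b, d) \<in> B then pmf \<mu> (z, a, b, d) else 0)"
proof -
  let ?A = "{..<l} \<times> {..<n} \<times> {..<m} \<times> {..<k}"
  have "measure_pmf.prob \<mu> B = measure_pmf.prob \<mu> (B \<inter> ?A)"
    using assms by (intro prob_cong_supp) auto
  also have "\<dots> = sum (pmf \<mu>) (B \<inter> ?A)" by (intro measure_measure_pmf_finite finite_Int disjI2) simp
  also have "\<dots> = (\<Sum>u\<in>?A. if u \<in> B then pmf \<mu> u else 0)"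
    by (simp add: sum.If_cases Int_commute)
  also have "\<dots> = (\<Sum>z<l. \<Sum>a<n. \<Sum>b<m. \<Sum>d<k. if (z, a, b, d) \<in> B then pmf \<mu> (z, a, b, d) else 0)"
    by (rule sum4)
  finally show ?thesis .
qed

lemma sumprod4:
  "finite A1 \<Longrightarrow> finite A2 \<Longrightarrow> finite A3 \<Longrightarrow> finite A4 \<Longrightarrow>
   sum h (A1 \<times> A2 \<times> A3 \<times> A4) = (\<Sum>z\<in>A1. \<Sum>a\<in>A2. \<Sum>b\<in>A3. \<Sum>d\<in>A4. h (z, a, b, d))"
  by (simp add: sum.cartesian_product)

lemma prob_map_supp:
  assumes "\<forall>w\<in>set_pmf \<omega>. w \<in> E \<longleftrightarrow> g w \<in> E'"
  shows "measure_pmf.prob \<omega> E = measure_pmf.prob (map_pmf g \<omega>) E'"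
  using assms by (simp add: prob_cong_supp)




lemma ji_valid:
  fixes \<omega> :: "world_ji pmf" and f :: "nat \<times> nat \<times> nat \<Rightarrow> real" and K :: "real \<Rightarrow> real \<Rightarrow> real"
  assumes ji: "ji_law \<gamma> n l \<omega>" and inj: "inj_on \<gamma> {..<n}" and l: "l > 0"
    and pos: "\<forall>z<l. measure_pmf.prob (map_pmf fst \<omega>) {o'. obsZ o' = z} > 0"
    and DF: "\<forall>a<n. \<forall>b<n. (\<Sum>z<l. max (f (b, 1, z)) (f (a, 0, z))) \<le> K (\<gamma> a) (\<gamma> b)"
  shows "fdot \<gamma> n l f (map_pmf fst \<omega>) \<le> measure_pmf.expectation \<omega> (\<lambda>w. K (snd w 0 0) (snd w 1 0))"
proof -
  define \<iota> where "\<iota> = the_inv_into {..<n} \<gamma>"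
  define g where "g = (\<lambda>w::world_ji. (obsZ (fst w), \<iota> (snd w 0 0), \<iota> (snd w 1 0), fst (snd (fst w))))"
  define \<mu> where "\<mu> = map_pmf g \<omega>"
  define p4 where "p4 = pmf \<mu>"
  define A where "A = {..<l} \<times> {..<n} \<times> {..<n} \<times> {..<(2::nat)}"
  have all: "\<forall>w\<in>set_pmf \<omega>. case w of ((Y, D, Z), Yp) \<Rightarrow>
        Z < l
      \<and> D \<in> {0, 1}
      \<and> (\<forall>d<2. \<forall>z<l. Yp d z \<in> \<gamma> ` {..<n})
      \<and> (\<forall>d<2. \<forall>z<l. \<forall>z'<l. Yp d z = Yp d z')
      \<and> Y = (1 - real D) * Yp 0 0 + real D * Yp 1 0"
    using ji unfolding ji_law_def by (rule conjunct1)
  have supp: "obsZ (fst w) < l \<and> fst (snd (fst w)) \<in> {0, 1} \<and> snd w 0 0 \<in> \<gamma> ` {..<n} \<and> snd w 1 0 \<in> \<gamma> ` {..<n}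
      \<and> fst (fst w) = (1 - real (fst (snd (fst w)))) * snd w 0 0 + real (fst (snd (fst w))) * snd w 1 0"
    if "w \<in> set_pmf \<omega>" for w
  proof -
    obtain Y D Z Yp where w: "w = ((Y, D, Z), Yp)" by (metis prod.collapse)
    have "Z < l \<and> D \<in> {0, 1} \<and> (\<forall>d<2. \<forall>z<l. Yp d z \<in> \<gamma> ` {..<n}) \<and> (\<forall>d<2. \<forall>z<l. \<forall>z'<l. Yp d z = Yp d z') \<and> Y = (1 - real D) * Yp 0 0 + real D * Yp 1 0"
      using bspec[OF all that] unfolding w prod.case by assumption
    then have "Z < l" "D \<in> {0, 1}" "Yp 0 0 \<in> \<gamma> ` {..<n}" "Yp 1 0 \<in> \<gamma> ` {..<n}"
       "Y = (1 - real D) * Yp 0 0 + real D * Yp 1 0"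
      using l by auto
    then show ?thesis unfolding w obsZ_def by simp
  qed
  have inv: "\<gamma> (\<iota> (snd w 0 0)) = snd w 0 0 \<and> \<gamma> (\<iota> (snd w 1 0)) = snd w 1 0 \<and> \<iota> (snd w 0 0) < n \<and> \<iota> (snd w 1 0) < n"
    if "w \<in> set_pmf \<omega>" for w
    using supp[OF that] inj unfolding \<iota>_def
    by (simp add: f_the_inv_into_f the_inv_into_into[where B="{..<n}", simplified])
  have suppmu: "set_pmf \<mu> \<subseteq> A"
  proof
    fix u assume "u \<in> set_pmf \<mu>"
    then obtain w where w: "w \<in> set_pmf \<omega>" and u: "u = g w" unfolding \<mu>_def by auto
    show "u \<in> A" using supp[OF w] inv[OF w] unfolding u g_def A_def by auto
  qed
  have finA: "finite A" unfolding A_def by simp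
  define H where "H = (\<lambda>u::nat \<times> nat \<times> nat \<times> nat. case u of (z, a, b, d) \<Rightarrow> (\<gamma> (if d = 1 then b else a), d, z))"
  have PH: "map_pmf fst \<omega> = map_pmf H \<mu>"
    unfolding \<mu>_def map_pmf_comp
  proof (intro map_pmf_cong refl)
    fix w assume w: "w \<in> set_pmf \<omega>"
    show "fst w = H (g w)" using supp[OF w] inv[OF w]
      by (cases w) (auto simp: H_def g_def obsZ_def)
  qed
  have pmu_nonneg: "\<And>u. p4 u \<ge> 0" unfolding p4_def by simp
  have pmu_sum: "measure_pmf.prob \<mu> (A1 \<times> A2 \<times> A3 \<times> A4) = (\<Sum>z\<in>A1. \<Sum>a\<in>A2. \<Sum>b\<in>A3. \<Sum>d\<in>A4. p4 (z, a, b, d))"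
    if "finite A1" "finite A2" "finite A3" "finite A4" for A1 A2 A3 A4
    using that unfolding p4_def by (simp add: measure_measure_pmf_finite sumprod4)
  define piZ where "piZ z = (\<Sum>a<n. \<Sum>b<n. p4 (z, a, b, 0) + p4 (z, a, b, 1))" for z
  define rho where "rho a b = (\<Sum>z<l. p4 (z, a, b, 0) + p4 (z, a, b, 1))" for a b
  have two: "\<And>h::nat \<Rightarrow> real. (\<Sum>d<2. h d) = h 0 + h 1"
    by (simp add: numeral_2_eq_2)
  have PZ: "measure_pmf.prob (map_pmf fst \<omega>) {o'. obsZ o' = z} = piZ z" if z: "z < l" for z
  proof -
    have "measure_pmf.prob (map_pmf fst \<omega>) {o'. obsZ o' = z} = measure_pmf.prob \<mu> (H -` {o'. obsZ o' = z})"
      unfolding PH by simp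
    also have "\<dots> = measure_pmf.prob \<mu> ({z} \<times> {..<n} \<times> {..<n} \<times> {..<2})"
      using suppmu by (intro prob_cong_supp) (auto simp: A_def H_def obsZ_def)
    also have "\<dots> = piZ z" by (subst pmu_sum) (auto simp: piZ_def two)
    finally show ?thesis .
  qed
  have PV1: "measure_pmf.prob (map_pmf fst \<omega>) {(\<gamma> y, 1, z)} = (\<Sum>a<n. p4 (z, a, y, 1))"
    if z: "z < l" and y: "y < n" for z y
  proof -
    have "measure_pmf.prob (map_pmf fst \<omega>) {(\<gamma> y, 1, z)} = measure_pmf.prob \<mu> (H -` {(\<gamma> y, 1, z)})"
      unfolding PH by simp
    also have "\<dots> = measure_pmf.prob \<mu> ({z} \<times> {..<n} \<times> {y} \<times> {1})"
    proof (intro prob_cong_supp ballI)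
      fix u assume "u \<in> set_pmf \<mu>"
      then have "u \<in> A" using suppmu by auto
      then show "u \<in> H -` {(\<gamma> y, 1, z)} \<longleftrightarrow> u \<in> {z} \<times> {..<n} \<times> {y} \<times> {1}"
        using y by (auto simp: A_def H_def inj_on_eq_iff[OF inj])
    qed
    also have "\<dots> = (\<Sum>a<n. p4 (z, a, y, 1))" by (subst pmu_sum) auto
    finally show ?thesis .
  qed
  have PV0: "measure_pmf.prob (map_pmf fst \<omega>) {(\<gamma> y, 0, z)} = (\<Sum>b<n. p4 (z, y, b, 0))"
    if z: "z < l" and y: "y < n" for z y
  proof -
    have "measure_pmf.prob (map_pmf fst \<omega>) {(\<gamma> y, 0, z)} = measure_pmf.prob \<mu> (H -` {(\<gamma> y, 0, z)})"
      unfolding PH by simp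
    also have "\<dots> = measure_pmf.prob \<mu> ({z} \<times> {y} \<times> {..<n} \<times> {0})"
    proof (intro prob_cong_supp ballI)
      fix u assume "u \<in> set_pmf \<mu>"
      then have "u \<in> A" using suppmu by auto
      then show "u \<in> H -` {(\<gamma> y, 0, z)} \<longleftrightarrow> u \<in> {z} \<times> {y} \<times> {..<n} \<times> {0}"
        using y by (auto simp: A_def H_def inj_on_eq_iff[OF inj])
    qed
    also have "\<dots> = (\<Sum>b<n. p4 (z, y, b, 0))" by (subst pmu_sum) auto
    finally show ?thesis .
  qed
  have indep: "indep_discrete \<omega> (\<lambda>w. obsZ (fst w)) (\<lambda>w. (snd w 0 0, snd w 1 0))"
    using ji unfolding ji_law_def by (rule conjunct2)
  have IND: "p4 (z, a, b, 0) + p4 (z, a, b, 1) = piZ z * rho a b"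
    if z: "z < l" and a: "a < n" and b: "b < n" for z a b
  proof -
    have e1: "measure_pmf.prob \<omega> {w. obsZ (fst w) = z \<and> (snd w 0 0, snd w 1 0) = (\<gamma> a, \<gamma> b)}
        = measure_pmf.prob \<mu> ({z} \<times> {a} \<times> {b} \<times> {..<2})"
      unfolding \<mu>_def
    proof (intro prob_map_supp ballI)
      fix w assume w: "w \<in> set_pmf \<omega>"
      show "w \<in> {w. obsZ (fst w) = z \<and> (snd w 0 0, snd w 1 0) = (\<gamma> a, \<gamma> b)} \<longleftrightarrow> g w \<in> {z} \<times> {a} \<times> {b} \<times> {..<2}"
        using supp[OF w] inv[OF w] a b unfolding g_def
        by (auto simp: inj_on_eq_iff[OF inj])
    qed
    have e2: "measure_pmf.prob \<omega> {w. obsZ (fst w) = z} = piZ z"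
      using PZ[OF z] by (simp add: vimage_def)
    have e3: "measure_pmf.prob \<omega> {w. (snd w 0 0, snd w 1 0) = (\<gamma> a, \<gamma> b)}
        = measure_pmf.prob \<mu> ({..<l} \<times> {a} \<times> {b} \<times> {..<2})"
      unfolding \<mu>_def
    proof (intro prob_map_supp ballI)
      fix w assume w: "w \<in> set_pmf \<omega>"
      show "w \<in> {w. (snd w 0 0, snd w 1 0) = (\<gamma> a, \<gamma> b)} \<longleftrightarrow> g w \<in> {..<l} \<times> {a} \<times> {b} \<times> {..<2}"
        using supp[OF w] inv[OF w] a b unfolding g_def
        by (auto simp: inj_on_eq_iff[OF inj])
    qed
    have "measure_pmf.prob \<omega> {w. obsZ (fst w) = z \<and> (snd w 0 0, snd w 1 0) = (\<gamma> a, \<gamma> b)}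
       = measure_pmf.prob \<omega> {w. obsZ (fst w) = z} * measure_pmf.prob \<omega> {w. (snd w 0 0, snd w 1 0) = (\<gamma> a, \<gamma> b)}"
      using indep unfolding indep_discrete_def by blast
    then show ?thesis unfolding e1 e2 e3
      by (simp add: pmu_sum two rho_def)
  qed
  have EX: "measure_pmf.expectation \<omega> (\<lambda>w. K (snd w 0 0) (snd w 1 0)) = (\<Sum>a<n. \<Sum>b<n. rho a b * K (\<gamma> a) (\<gamma> b))"
  proof -
    have "measure_pmf.expectation \<omega> (\<lambda>w. K (snd w 0 0) (snd w 1 0))
        = measure_pmf.expectation \<omega> (\<lambda>w. (\<lambda>u. K (\<gamma> (fst (snd u))) (\<gamma> (fst (snd (snd u))))) (g w))"
    proof (intro integral_cong_AE)
      show "AE w in measure_pmf \<omega>. K (snd w 0 0) (snd w 1 0) = (\<lambda>u. K (\<gamma> (fst (snd u))) (\<gamma> (fst (snd (snd u))))) (g w)"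
        unfolding AE_measure_pmf_iff
      proof
        fix w assume w: "w \<in> set_pmf \<omega>"
        have "\<gamma> (\<iota> (snd w 0 0)) = snd w 0 0" "\<gamma> (\<iota> (snd w 1 0)) = snd w 1 0" using inv[OF w] by auto
        then show "K (snd w 0 0) (snd w 1 0) = (\<lambda>u. K (\<gamma> (fst (snd u))) (\<gamma> (fst (snd (snd u))))) (g w)"
          unfolding g_def by simp
      qed
    qed simp_all
    also have "\<dots> = measure_pmf.expectation \<mu> (\<lambda>u. K (\<gamma> (fst (snd u))) (\<gamma> (fst (snd (snd u)))))"
      unfolding \<mu>_def by simp
    also have "\<dots> = (\<Sum>u\<in>A. K (\<gamma> (fst (snd u))) (\<gamma> (fst (snd (snd u)))) * pmf \<mu> u)"
      using suppmu finA by (intro integral_measure_pmf_real) auto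
    also have "\<dots> = (\<Sum>z<l. \<Sum>a<n. \<Sum>b<n. K (\<gamma> a) (\<gamma> b) * (p4 (z, a, b, 0) + p4 (z, a, b, 1)))"
      unfolding A_def sum4 p4_def by (simp add: two algebra_simps)
    also have "\<dots> = (\<Sum>a<n. \<Sum>b<n. rho a b * K (\<gamma> a) (\<gamma> b))"
      unfolding rho_def sum_distrib_left sum_distrib_right
      by (subst sum.swap) (subst (2) sum.swap, simp add: algebra_simps)
    finally show ?thesis .
  qed
  have piZpos: "piZ z > 0" if "z < l" for z using pos that PZ by auto
  have FD: "fdot \<gamma> n l f (map_pmf fst \<omega>) =
     (\<Sum>z<l. (\<Sum>a<n. \<Sum>b<n. f (a, 0, z) * p4 (z, a, b, 0) + f (b, 1, z) * p4 (z, a, b, 1)) / piZ z)"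
  proof -
    have "fdot \<gamma> n l f (map_pmf fst \<omega>) = (\<Sum>y<n. \<Sum>d<2. \<Sum>z<l. f (y, d, z) * pvec \<gamma> (map_pmf fst \<omega>) (y, d, z))"
      unfolding fdot_def coords_def by (simp add: sum.cartesian_product)
    also have "\<dots> = (\<Sum>y<n. \<Sum>z<l. (f (y, 0, z) * (\<Sum>b<n. p4 (z, y, b, 0)) + f (y, 1, z) * (\<Sum>a<n. p4 (z, a, y, 1))) / piZ z)"
    proof (rule sum.cong[OF refl])
      fix y assume y: "y \<in> {..<n}"
      have pv0: "pvec \<gamma> (map_pmf fst \<omega>) (y, 0, z) = (\<Sum>b<n. p4 (z, y, b, 0)) / piZ z" if z: "z \<in> {..<l}" for z
        using z y by (simp only: pvec_def prod.case PV0 PZ lessThan_iff)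
      have pv1: "pvec \<gamma> (map_pmf fst \<omega>) (y, Suc 0, z) = (\<Sum>a<n. p4 (z, a, y, 1)) / piZ z" if z: "z \<in> {..<l}" for z
        using z y by (simp only: pvec_def prod.case PV1 PZ lessThan_iff One_nat_def[symmetric])
      show "(\<Sum>d<2. \<Sum>z<l. f (y, d, z) * pvec \<gamma> (map_pmf fst \<omega>) (y, d, z)) =
          (\<Sum>z<l. (f (y, 0, z) * (\<Sum>b<n. p4 (z, y, b, 0)) + f (y, 1, z) * (\<Sum>a<n. p4 (z, a, y, 1))) / piZ z)"
        unfolding two by (simp add: pv0 pv1 sum.distrib add_divide_distrib)
    qed
    also have "\<dots> = (\<Sum>z<l. (\<Sum>y<n. f (y, 0, z) * (\<Sum>b<n. p4 (z, y, b, 0))) / piZ z + (\<Sum>y<n. f (y, 1, z) * (\<Sum>a<n. p4 (z, a, y, 1))) / piZ z)"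
      by (subst sum.swap) (simp add: add_divide_distrib sum.distrib sum_divide_distrib)
    also have "\<dots> = (\<Sum>z<l. (\<Sum>a<n. \<Sum>b<n. f (a, 0, z) * p4 (z, a, b, 0)) / piZ z + (\<Sum>a<n. \<Sum>b<n. f (b, 1, z) * p4 (z, a, b, 1)) / piZ z)"
    proof (rule sum.cong[OF refl])
      fix z
      have e1: "(\<Sum>y<n. f (y, 0, z) * (\<Sum>b<n. p4 (z, y, b, 0))) = (\<Sum>a<n. \<Sum>b<n. f (a, 0, z) * p4 (z, a, b, 0))"
        by (simp add: sum_distrib_left)
      have e2: "(\<Sum>y<n. f (y, 1, z) * (\<Sum>a<n. p4 (z, a, y, 1))) = (\<Sum>a<n. \<Sum>b<n. f (b, 1, z) * p4 (z, a, b, 1))"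
        unfolding sum_distrib_left by (rule sum.swap)
      show "(\<Sum>y<n. f (y, 0, z) * (\<Sum>b<n. p4 (z, y, b, 0))) / piZ z + (\<Sum>y<n. f (y, 1, z) * (\<Sum>a<n. p4 (z, a, y, 1))) / piZ z
          = (\<Sum>a<n. \<Sum>b<n. f (a, 0, z) * p4 (z, a, b, 0)) / piZ z + (\<Sum>a<n. \<Sum>b<n. f (b, 1, z) * p4 (z, a, b, 1)) / piZ z"
        unfolding e1 e2 ..
    qed
    also have "\<dots> = (\<Sum>z<l. (\<Sum>a<n. \<Sum>b<n. f (a, 0, z) * p4 (z, a, b, 0) + f (b, 1, z) * p4 (z, a, b, 1)) / piZ z)"
      by (simp add: add_divide_distrib sum.distrib)
    finally show ?thesis .
  qed
  define psi where "psi z a b = max (f (b, 1, z)) (f (a, 0, z))" for z a b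
  have STEP: "(\<Sum>a<n. \<Sum>b<n. f (a, 0, z) * p4 (z, a, b, 0) + f (b, 1, z) * p4 (z, a, b, 1)) / piZ z
      \<le> (\<Sum>a<n. \<Sum>b<n. psi z a b * rho a b)" if z: "z < l" for z
  proof -
    have "(\<Sum>a<n. \<Sum>b<n. f (a, 0, z) * p4 (z, a, b, 0) + f (b, 1, z) * p4 (z, a, b, 1))
        \<le> (\<Sum>a<n. \<Sum>b<n. psi z a b * (p4 (z, a, b, 0) + p4 (z, a, b, 1)))"
    proof (intro sum_mono)
      fix a b
      have "f (a, 0, z) * p4 (z, a, b, 0) \<le> psi z a b * p4 (z, a, b, 0)"
        by (intro mult_right_mono) (auto simp: psi_def pmu_nonneg)
      moreover have "f (b, 1, z) * p4 (z, a, b, 1) \<le> psi z a b * p4 (z, a, b, 1)"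
        by (intro mult_right_mono) (auto simp: psi_def pmu_nonneg)
      ultimately show "f (a, 0, z) * p4 (z, a, b, 0) + f (b, 1, z) * p4 (z, a, b, 1) \<le> psi z a b * (p4 (z, a, b, 0) + p4 (z, a, b, 1))"
        by (simp add: algebra_simps)
    qed
    also have "\<dots> = piZ z * (\<Sum>a<n. \<Sum>b<n. psi z a b * rho a b)"
      unfolding sum_distrib_left
    proof (intro sum.cong refl)
      fix a b assume a: "a \<in> {..<n}" and b: "b \<in> {..<n}"
      show "psi z a b * (p4 (z, a, b, 0) + p4 (z, a, b, 1)) = piZ z * (psi z a b * rho a b)"
        using IND[OF z, of a b] a b by simp
    qed
    finally show ?thesis using piZpos[OF z] by (simp add: divide_le_eq mult.commute)
  qed
  have rho_nonneg: "rho a b \<ge> 0" for a b unfolding rho_def by (intro sum_nonneg) (simp add: pmu_nonneg add_nonneg_nonneg)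
  have "fdot \<gamma> n l f (map_pmf fst \<omega>) \<le> (\<Sum>z<l. \<Sum>a<n. \<Sum>b<n. psi z a b * rho a b)"
    unfolding FD by (intro sum_mono STEP) simp
  also have "\<dots> = (\<Sum>a<n. \<Sum>b<n. rho a b * (\<Sum>z<l. psi z a b))"
    by (subst sum.swap) (simp add: sum.swap[of _ "{..<l}" "{..<n}"] sum_distrib_left mult.commute)
  also have "\<dots> \<le> (\<Sum>a<n. \<Sum>b<n. rho a b * K (\<gamma> a) (\<gamma> b))"
    using DF unfolding psi_def by (intro sum_mono mult_left_mono rho_nonneg) auto
  also have "\<dots> = measure_pmf.expectation \<omega> (\<lambda>w. K (snd w 0 0) (snd w 1 0))" using EX by simp
  finally show ?thesis .
qed

lemma prob_split:
  assumes C: "finite C" and V: "\<forall>w\<in>set_pmf \<omega>. V w \<in> C"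
  shows "measure_pmf.prob \<omega> E = (\<Sum>c\<in>C. measure_pmf.prob \<omega> {w \<in> E. V w = c})"
proof -
  have "measure_pmf.prob \<omega> E = measure_pmf.prob \<omega> (\<Union>c\<in>C. {w \<in> E. V w = c})"
    using V by (intro prob_cong_supp) auto
  also have "\<dots> = (\<Sum>c\<in>C. measure_pmf.prob \<omega> {w \<in> E. V w = c})"
    using C by (intro measure_pmf.finite_measure_finite_Union) (auto simp: disjoint_family_on_def)
  finally show ?thesis .
qed

lemma indep_comp:
  assumes ind: "indep_discrete \<omega> X V" and C: "finite C" and VC: "\<forall>w\<in>set_pmf \<omega>. V w \<in> C"
  shows "indep_discrete \<omega> X (\<lambda>w. \<psi> (V w))"
  unfolding indep_discrete_def
proof (intro allI)
  fix a b
  have "measure_pmf.prob \<omega> {w. X w = a \<and> \<psi> (V w) = b}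
      = (\<Sum>c\<in>C. measure_pmf.prob \<omega> {w \<in> {w. X w = a \<and> \<psi> (V w) = b}. V w = c})"
    by (rule prob_split[OF C VC])
  also have "\<dots> = (\<Sum>c\<in>C. if \<psi> c = b then measure_pmf.prob \<omega> {w. X w = a} * measure_pmf.prob \<omega> {w. V w = c} else 0)"
  proof (intro sum.cong refl)
    fix c
    show "measure_pmf.prob \<omega> {w \<in> {w. X w = a \<and> \<psi> (V w) = b}. V w = c} =
        (if \<psi> c = b then measure_pmf.prob \<omega> {w. X w = a} * measure_pmf.prob \<omega> {w. V w = c} else 0)"
    proof (cases "\<psi> c = b")
      case True
      then have e: "{w \<in> {w. X w = a \<and> \<psi> (V w) = b}. V w = c} = {w. X w = a \<and> V w = c}" by auto
      show ?thesis using True ind unfolding indep_discrete_def e by simp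
    next
      case False
      then have e: "{w \<in> {w. X w = a \<and> \<psi> (V w) = b}. V w = c} = {}" by auto
      show ?thesis using False unfolding e by simp
    qed
  qed
  also have "\<dots> = measure_pmf.prob \<omega> {w. X w = a} * (\<Sum>c\<in>C. if \<psi> c = b then measure_pmf.prob \<omega> {w. V w = c} else 0)"
    by (simp add: sum_distrib_left if_distrib cong: if_cong)
  also have "(\<Sum>c\<in>C. if \<psi> c = b then measure_pmf.prob \<omega> {w. V w = c} else 0) = measure_pmf.prob \<omega> {w. \<psi> (V w) = b}"
  proof -
    have "measure_pmf.prob \<omega> {w. \<psi> (V w) = b} = (\<Sum>c\<in>C. measure_pmf.prob \<omega> {w \<in> {w. \<psi> (V w) = b}. V w = c})"
      by (rule prob_split[OF C VC])
    also have "\<dots> = (\<Sum>c\<in>C. if \<psi> c = b then measure_pmf.prob \<omega> {w. V w = c} else 0)"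
    proof (intro sum.cong refl)
      fix c
      show "measure_pmf.prob \<omega> {w \<in> {w. \<psi> (V w) = b}. V w = c} = (if \<psi> c = b then measure_pmf.prob \<omega> {w. V w = c} else 0)"
      proof (cases "\<psi> c = b")
        case True
        then have e: "{w \<in> {w. \<psi> (V w) = b}. V w = c} = {w. V w = c}" by auto
        show ?thesis using True unfolding e by simp
      next
        case False
        then have e: "{w \<in> {w. \<psi> (V w) = b}. V w = c} = {}" by auto
        show ?thesis using False unfolding e by simp
      qed
    qed
    finally show ?thesis by simp
  qed
  finally show "measure_pmf.prob \<omega> {w. X w = a \<and> \<psi> (V w) = b} =
      measure_pmf.prob \<omega> {w. X w = a} * measure_pmf.prob \<omega> {w. \<psi> (V w) = b}" .
qed

definition dropD :: "world_ra \<Rightarrow> world_ji" where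
  "dropD w = (fst w, fst (snd w))"

lemma ra_ji:
  assumes ra: "ra_law \<gamma> n l \<omega>" and l: "l > 0"
  shows "ji_law \<gamma> n l (map_pmf dropD \<omega>)"
proof -
  have all: "\<forall>w\<in>set_pmf \<omega>. case w of ((Y, D, Z), Yp, Dp) \<Rightarrow>
        Z < l
      \<and> (\<forall>d<2. \<forall>z<l. Yp d z \<in> \<gamma> ` {..<n})
      \<and> (\<forall>z<l. Dp z \<in> {0, 1})
      \<and> (\<forall>d<2. \<forall>z<l. \<forall>z'<l. Yp d z = Yp d z')
      \<and> Y = (1 - real D) * Yp 0 0 + real D * Yp 1 0
      \<and> D = (\<Sum>z<l. (if Z = z then 1 else 0) * Dp z)"
    using ra unfolding ra_law_def by (rule conjunct1)
  have supp: "Z < l \<and> (\<forall>d<2. \<forall>z<l. Yp d z \<in> \<gamma> ` {..<n}) \<and> (\<forall>z<l. Dp z \<in> {0, 1})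
      \<and> (\<forall>d<2. \<forall>z<l. \<forall>z'<l. Yp d z = Yp d z') \<and> Y = (1 - real D) * Yp 0 0 + real D * Yp 1 0
      \<and> D = (\<Sum>z<l. (if Z = z then 1 else 0) * Dp z)"
    if "((Y, D, Z), Yp, Dp) \<in> set_pmf \<omega>" for Y D Z Yp Dp
    using bspec[OF all that] unfolding prod.case by assumption
  show ?thesis unfolding ji_law_def
  proof
  show "\<forall>w\<in>set_pmf (map_pmf dropD \<omega>). case w of ((Y, D, Z), Yp) \<Rightarrow>
        Z < l
      \<and> D \<in> {0, 1}
      \<and> (\<forall>d<2. \<forall>z<l. Yp d z \<in> \<gamma> ` {..<n})
      \<and> (\<forall>d<2. \<forall>z<l. \<forall>z'<l. Yp d z = Yp d z')
      \<and> Y = (1 - real D) * Yp 0 0 + real D * Yp 1 0"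
  proof
    fix w' assume "w' \<in> set_pmf (map_pmf dropD \<omega>)"
    then obtain w where w: "w \<in> set_pmf \<omega>" and w': "w' = dropD w" by auto
    obtain Y D Z Yp Dp where wd: "w = ((Y, D, Z), Yp, Dp)" by (metis prod.collapse)
    note c = supp[OF w[unfolded wd]]
    have s1: "Z < l" using c by (elim conjE)
    have s2: "\<forall>d<2. \<forall>z<l. Yp d z \<in> \<gamma> ` {..<n}" using c by (elim conjE)
    have s3: "\<forall>z<l. Dp z \<in> {0, 1}" using c by (elim conjE)
    have s4: "\<forall>d<2. \<forall>z<l. \<forall>z'<l. Yp d z = Yp d z'" using c by (elim conjE)
    have s5: "Y = (1 - real D) * Yp 0 0 + real D * Yp 1 0" using c by (elim conjE)
    have s6: "D = (\<Sum>z<l. (if Z = z then 1 else 0) * Dp z)" using c by (elim conjE)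
    have "D = Dp Z" using s6 sum_if_eq[OF s1, of Dp] by simp
    then have "D \<in> {0, 1}" using s1 s3 by auto
    then show "case w' of ((Y, D, Z), Yp) \<Rightarrow>
        Z < l
      \<and> D \<in> {0, 1}
      \<and> (\<forall>d<2. \<forall>z<l. Yp d z \<in> \<gamma> ` {..<n})
      \<and> (\<forall>d<2. \<forall>z<l. \<forall>z'<l. Yp d z = Yp d z')
      \<and> Y = (1 - real D) * Yp 0 0 + real D * Yp 1 0"
      unfolding w' wd dropD_def fst_conv snd_conv prod.case using s1 s2 s4 s5 by (intro conjI)
  qed
next
  have ind: "indep_discrete \<omega> (\<lambda>w. obsZ (fst w))
       (\<lambda>w. (fst (snd w) 0 0, fst (snd w) 1 0, map (snd (snd w)) [0..<l]))"
    using ra unfolding ra_law_def by (rule conjunct2)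
  define C where "C = \<gamma> ` {..<n} \<times> \<gamma> ` {..<n} \<times> {xs. set xs \<subseteq> {0::nat, 1} \<and> length xs = l}"
  have finC: "finite C" unfolding C_def by (intro finite_cartesian_product finite_imageI finite_lists_length_eq) auto
  have VC: "\<forall>w\<in>set_pmf \<omega>. (fst (snd w) 0 0, fst (snd w) 1 0, map (snd (snd w)) [0..<l]) \<in> C"
  proof
    fix w assume w: "w \<in> set_pmf \<omega>"
    obtain Y D Z Yp Dp where wd: "w = ((Y, D, Z), Yp, Dp)" by (metis prod.collapse)
    note c = supp[OF w[unfolded wd]]
    have s1: "\<forall>d<2. \<forall>z<l. Yp d z \<in> \<gamma> ` {..<n}" using c by (elim conjE)
    have s2: "\<forall>z<l. Dp z \<in> {0, 1}" using c by (elim conjE)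
    note s = s1 s2
    show "(fst (snd w) 0 0, fst (snd w) 1 0, map (snd (snd w)) [0..<l]) \<in> C"
      using s l unfolding wd C_def by auto
  qed
  have "indep_discrete \<omega> (\<lambda>w. obsZ (fst w))
       (\<lambda>w. (\<lambda>v. (fst v, fst (snd v))) (fst (snd w) 0 0, fst (snd w) 1 0, map (snd (snd w)) [0..<l]))"
    by (rule indep_comp[OF ind finC VC])
  then show "indep_discrete (map_pmf dropD \<omega>) (\<lambda>w. obsZ (fst w)) (\<lambda>w. (snd w 0 0, snd w 1 0))"
    unfolding indep_map by (simp add: dropD_def)
  qed
qed





lemma ate_sub_JI:
  assumes l: "l > 0"
  shows "ate_set m \<gamma> n l P \<subseteq> ate_set JointIndependence \<gamma> n l P"
proof (cases m)
  case RandomAssignment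
  show ?thesis
  proof
    fix x assume "x \<in> ate_set m \<gamma> n l P"
    then obtain \<omega> where ra: "ra_law \<gamma> n l \<omega>" and P: "map_pmf fst \<omega> = P"
      and x: "x = measure_pmf.expectation \<omega> (\<lambda>w. fst (snd w) 1 0 - fst (snd w) 0 0)"
      unfolding ate_set_def RandomAssignment by auto
    have "ji_law \<gamma> n l (map_pmf dropD \<omega>)" by (rule ra_ji[OF ra l])
    moreover have "map_pmf fst (map_pmf dropD \<omega>) = P" using P by (simp add: map_pmf_comp dropD_def)
    moreover have "x = measure_pmf.expectation (map_pmf dropD \<omega>) (\<lambda>w. snd w 1 0 - snd w 0 0)"
      using x by (simp add: dropD_def)
    ultimately have "x \<in> {measure_pmf.expectation \<omega>' (\<lambda>w. snd w 1 0 - snd w 0 0) | \<omega>'. ji_law \<gamma> n l \<omega>' \<and> map_pmf fst \<omega>' = P}"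
      by blast
    then show "x \<in> ate_set JointIndependence \<gamma> n l P" unfolding ate_set_def by simp
  qed
next
  case JointIndependence
  then show ?thesis by simp
qed

lemma RA_sub_ate:
  assumes l: "l > 0"
  shows "ate_set RandomAssignment \<gamma> n l P \<subseteq> ate_set m \<gamma> n l P"
  using ate_sub_JI[OF l, of RandomAssignment] by (cases m) auto

lemma valid_gen:
  assumes x: "x \<in> ate_set m \<gamma> n l P" and inj: "inj_on \<gamma> {..<n}" and l: "l > 0"
    and pos: "\<forall>z<l. measure_pmf.prob P {o'. obsZ o' = z} > 0"
    and DF: "\<forall>a<n. \<forall>b<n. (\<Sum>z<l. max (f (b, 1, z)) (f (a, 0, z))) \<le> s * (\<gamma> b - \<gamma> a)"
  shows "fdot \<gamma> n l f P \<le> s * x"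
proof -
  have "x \<in> ate_set JointIndependence \<gamma> n l P" using ate_sub_JI[OF l] x by blast
  then obtain \<omega> where ji: "ji_law \<gamma> n l \<omega>" and P: "map_pmf fst \<omega> = P"
    and x: "x = measure_pmf.expectation \<omega> (\<lambda>w. snd w 1 0 - snd w 0 0)"
    unfolding ate_set_def by auto
  have "fdot \<gamma> n l f (map_pmf fst \<omega>) \<le> measure_pmf.expectation \<omega> (\<lambda>w. (\<lambda>u v. s * (v - u)) (snd w 0 0) (snd w 1 0))"
    using pos DF unfolding P[symmetric] by (intro ji_valid[OF ji inj l]) auto
  also have "\<dots> = s * x" unfolding x by simp
  finally show ?thesis using P by simp
qed

lemma core_lower:
  fixes S :: "'p \<Rightarrow> real set" and \<phi> :: "'f \<Rightarrow> 'p \<Rightarrow> real"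
  assumes finG: "finite G" and neG: "G \<noteq> {}"
    and hyp: "\<forall>P. C P \<longrightarrow> Inf (S P) = Max ((\<lambda>g. \<phi> g P) ` G)"
    and CS: "\<forall>P. C P \<longrightarrow> S P \<noteq> {}"
    and pt: "\<forall>i\<in>I. C (Pt i) \<and> (\<forall>x\<in>S (Pt i). v i \<le> x)"
    and mid: "\<forall>i\<in>I. \<forall>j\<in>I. i \<noteq> j \<longrightarrow> C (Pm i j) \<and> (\<forall>g\<in>G. \<phi> g (Pm i j) = (\<phi> g (Pt i) + \<phi> g (Pt j)) / 2)
        \<and> (\<exists>x\<in>S (Pm i j). x < (v i + v j) / 2) \<and> bdd_below (S (Pm i j))"
  shows "card I \<le> card G"
proof -
  have "\<forall>i. \<exists>g. g \<in> G \<and> \<phi> g (Pt i) = Max ((\<lambda>g. \<phi> g (Pt i)) ` G)"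
  proof
    fix i
    have "Max ((\<lambda>g. \<phi> g (Pt i)) ` G) \<in> (\<lambda>g. \<phi> g (Pt i)) ` G" using finG neG by (intro Max_in) auto
    then show "\<exists>g. g \<in> G \<and> \<phi> g (Pt i) = Max ((\<lambda>g. \<phi> g (Pt i)) ` G)" by auto
  qed
  then obtain sel where sel0: "\<forall>i. sel i \<in> G \<and> \<phi> (sel i) (Pt i) = Max ((\<lambda>g. \<phi> g (Pt i)) ` G)"
    by (rule choice[THEN exE])
  then have sel: "\<And>i. sel i \<in> G" "\<And>i. \<phi> (sel i) (Pt i) = Max ((\<lambda>g. \<phi> g (Pt i)) ` G)" by auto
  have lb: "v i \<le> \<phi> (sel i) (Pt i)" if i: "i \<in> I" for i
  proof -
    have "v i \<le> Inf (S (Pt i))" using pt i CS by (intro cInf_greatest) auto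
    also have "\<dots> = \<phi> (sel i) (Pt i)" using hyp pt i sel by auto
    finally show ?thesis .
  qed
  have "inj_on sel I"
  proof (rule inj_onI, rule ccontr)
    fix i j assume i: "i \<in> I" and j: "j \<in> I" and e: "sel i = sel j" and ne: "i \<noteq> j"
    note m = mid[rule_format, OF i j ne]
    have Cm: "C (Pm i j)" using m by (rule conjunct1)
    have av: "\<forall>g\<in>G. \<phi> g (Pm i j) = (\<phi> g (Pt i) + \<phi> g (Pt j)) / 2" using m by (elim conjE)
    have bb: "bdd_below (S (Pm i j))" using m by (elim conjE)
    from conjunct1[OF conjunct2[OF conjunct2[OF m]]] obtain x where x: "x \<in> S (Pm i j)" "x < (v i + v j) / 2" by (rule bexE)
    have "\<phi> (sel i) (Pm i j) = (\<phi> (sel i) (Pt i) + \<phi> (sel i) (Pt j)) / 2" using av sel by auto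
    also have "\<dots> \<ge> (v i + v j) / 2" using lb[OF i] lb[OF j] e by simp
    finally have "x < \<phi> (sel i) (Pm i j)" using x by simp
    moreover have "Inf (S (Pm i j)) \<le> x" using x bb by (intro cInf_lower) auto
    moreover have "Inf (S (Pm i j)) = Max ((\<lambda>g. \<phi> g (Pm i j)) ` G)" using hyp Cm by auto
    moreover have "\<phi> (sel i) (Pm i j) \<le> Max ((\<lambda>g. \<phi> g (Pm i j)) ` G)" using finG sel by (intro Max_ge) auto
    ultimately show False by simp
  qed
  then show ?thesis using finG sel by (intro card_inj_on_le) auto
qed

lemma core_upper:
  fixes S :: "'p \<Rightarrow> real set" and \<phi> :: "'f \<Rightarrow> 'p \<Rightarrow> real"
  assumes finG: "finite G" and neG: "G \<noteq> {}"
    and hyp: "\<forall>P. C P \<longrightarrow> Sup (S P) = Min ((\<lambda>g. \<phi> g P) ` G)"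
    and CS: "\<forall>P. C P \<longrightarrow> S P \<noteq> {}"
    and pt: "\<forall>i\<in>I. C (Pt i) \<and> (\<forall>x\<in>S (Pt i). x \<le> v i)"
    and mid: "\<forall>i\<in>I. \<forall>j\<in>I. i \<noteq> j \<longrightarrow> C (Pm i j) \<and> (\<forall>g\<in>G. \<phi> g (Pm i j) = (\<phi> g (Pt i) + \<phi> g (Pt j)) / 2)
        \<and> (\<exists>x\<in>S (Pm i j). x > (v i + v j) / 2) \<and> bdd_above (S (Pm i j))"
  shows "card I \<le> card G"
proof -
  have "\<forall>i. \<exists>g. g \<in> G \<and> \<phi> g (Pt i) = Min ((\<lambda>g. \<phi> g (Pt i)) ` G)"
  proof
    fix i
    have "Min ((\<lambda>g. \<phi> g (Pt i)) ` G) \<in> (\<lambda>g. \<phi> g (Pt i)) ` G" using finG neG by (intro Min_in) auto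
    then show "\<exists>g. g \<in> G \<and> \<phi> g (Pt i) = Min ((\<lambda>g. \<phi> g (Pt i)) ` G)" by auto
  qed
  then obtain sel where sel0: "\<forall>i. sel i \<in> G \<and> \<phi> (sel i) (Pt i) = Min ((\<lambda>g. \<phi> g (Pt i)) ` G)"
    by (rule choice[THEN exE])
  then have sel: "\<And>i. sel i \<in> G" "\<And>i. \<phi> (sel i) (Pt i) = Min ((\<lambda>g. \<phi> g (Pt i)) ` G)" by auto
  have ub: "\<phi> (sel i) (Pt i) \<le> v i" if i: "i \<in> I" for i
  proof -
    have "\<phi> (sel i) (Pt i) = Sup (S (Pt i))" using hyp pt i sel by auto
    also have "\<dots> \<le> v i" using pt i CS by (intro cSup_least) auto
    finally show ?thesis .
  qed
  have "inj_on sel I"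
  proof (rule inj_onI, rule ccontr)
    fix i j assume i: "i \<in> I" and j: "j \<in> I" and e: "sel i = sel j" and ne: "i \<noteq> j"
    note m = mid[rule_format, OF i j ne]
    have Cm: "C (Pm i j)" using m by (rule conjunct1)
    have av: "\<forall>g\<in>G. \<phi> g (Pm i j) = (\<phi> g (Pt i) + \<phi> g (Pt j)) / 2" using m by (elim conjE)
    have bb: "bdd_above (S (Pm i j))" using m by (elim conjE)
    from conjunct1[OF conjunct2[OF conjunct2[OF m]]] obtain x where x: "x \<in> S (Pm i j)" "x > (v i + v j) / 2" by (rule bexE)
    have "\<phi> (sel i) (Pm i j) = (\<phi> (sel i) (Pt i) + \<phi> (sel i) (Pt j)) / 2" using av sel by auto
    also have "\<dots> \<le> (v i + v j) / 2" using ub[OF i] ub[OF j] e by simp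
    finally have "\<phi> (sel i) (Pm i j) < x" using x by simp
    moreover have "x \<le> Sup (S (Pm i j))" using x bb by (intro cSup_upper) auto
    moreover have "Sup (S (Pm i j)) = Min ((\<lambda>g. \<phi> g (Pm i j)) ` G)" using hyp Cm by auto
    moreover have "Min ((\<lambda>g. \<phi> g (Pm i j)) ` G) \<le> \<phi> (sel i) (Pm i j)" using finG sel by (intro Min_le) auto
    ultimately show False by simp
  qed
  then show ?thesis using finG sel by (intro card_inj_on_le) auto
qed

lemma sum_list_upd_real:
  "p < length xs \<Longrightarrow> sum_list (map (h :: _ \<Rightarrow> real) (xs[p := t])) = sum_list (map h xs) - h (xs ! p) + h t"
proof (induction xs arbitrary: p)
  case Nil then show ?case by simp
next
  case (Cons x xs) then show ?case by (cases p) auto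
qed

definition rev_ok :: "nat \<Rightarrow> nat \<times> nat \<times> nat set \<Rightarrow> nat \<times> nat \<times> nat set \<Rightarrow> nat \<times> nat \<times> nat set \<Rightarrow> nat \<times> nat \<times> nat set \<Rightarrow> bool" where
  "rev_ok l t1 t2 t3 t4 = (\<forall>z<l. (vz t1 z = vz t3 z \<and> dz t1 z = dz t3 z \<and> vz t2 z = vz t4 z \<and> dz t2 z = dz t4 z)
      \<or> (vz t1 z = vz t4 z \<and> dz t1 z = dz t4 z \<and> vz t2 z = vz t3 z \<and> dz t2 z = dz t3 z))"

lemma rev_ok_Rs:
  assumes "rev_ok l t1 t2 t3 t4"
  shows "Rs g l t1 + Rs g l t2 = Rs g l t3 + Rs g l t4"
proof -
  have "\<And>z. z \<in> {..<l} \<Longrightarrow> g (vz t1 z, dz t1 z, z) + g (vz t2 z, dz t2 z, z) = g (vz t3 z, dz t3 z, z) + g (vz t4 z, dz t4 z, z)"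
    using assms unfolding rev_ok_def by auto
  then show ?thesis unfolding Rs_def sum.distrib[symmetric] by (rule sum.cong[OF refl])
qed

definition ateL :: "(nat \<Rightarrow> real) \<Rightarrow> (nat \<times> nat \<times> nat set) list \<Rightarrow> real" where
  "ateL \<gamma> xs = sum_list (map (kap \<gamma>) xs) / length xs"

definition bnd :: "nat \<Rightarrow> (nat \<times> nat \<times> nat set) list \<Rightarrow> bool" where
  "bnd n xs = (\<forall>t\<in>set xs. fst t < n \<and> fst (snd t) < n)"

lemma point_facts:
  assumes l: "l > 0" and ne: "xs \<noteq> []" and bd: "bnd n xs"
  shows "ateL \<gamma> xs \<in> ate_set m \<gamma> n l (Pof \<gamma> l xs)" and "compatible m \<gamma> n l (Pof \<gamma> l xs)"
proof -
  have "ateL \<gamma> xs \<in> ate_set RandomAssignment \<gamma> n l (Pof \<gamma> l xs)"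
  proof -
    have "ra_law \<gamma> n l (om \<gamma> l xs)" using om_ra[OF l ne] bd unfolding bnd_def by blast
    moreover have "ateL \<gamma> xs = measure_pmf.expectation (om \<gamma> l xs) (\<lambda>w. fst (snd w) 1 0 - fst (snd w) 0 0)"
      unfolding ateL_def using om_ate[OF l ne] by simp
    ultimately show ?thesis unfolding ate_set_def Pof_def by auto
  qed
  then show A: "ateL \<gamma> xs \<in> ate_set m \<gamma> n l (Pof \<gamma> l xs)" using RA_sub_ate[OF l] by blast
  show "compatible m \<gamma> n l (Pof \<gamma> l xs)"
    unfolding compatible_def using Pof_Z[OF l ne] A l by auto
qed

lemma mix_facts:
  assumes l: "l > 0" and inj: "inj_on \<gamma> {..<n}"
    and b1: "bnd n xs1" and b2: "bnd n xs2" and len1: "length xs1 = N" and len2: "length xs2 = N"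
    and p: "p < N" and b34: "bnd n [t3, t4]" and ro: "rev_ok l (xs1 ! p) (xs2 ! p) t3 t4"
  shows "fdot \<gamma> n l g (Pof \<gamma> l (xs1[p := t3] @ xs2[p := t4]))
        = (fdot \<gamma> n l g (Pof \<gamma> l xs1) + fdot \<gamma> n l g (Pof \<gamma> l xs2)) / 2"
    and "ateL \<gamma> (xs1[p := t3] @ xs2[p := t4]) = (ateL \<gamma> xs1 + ateL \<gamma> xs2) / 2
        + (kap \<gamma> t3 + kap \<gamma> t4 - kap \<gamma> (xs1 ! p) - kap \<gamma> (xs2 ! p)) / (2 * N)"
    and "bnd n (xs1[p := t3] @ xs2[p := t4])" and "xs1[p := t3] @ xs2[p := t4] \<noteq> []"
proof -
  let ?mx = "xs1[p := t3] @ xs2[p := t4]"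
  have ne1: "xs1 \<noteq> []" and ne2: "xs2 \<noteq> []" using p len1 len2 by auto
  show bm: "bnd n ?mx" using b1 b2 b34 unfolding bnd_def
    by (auto dest!: set_update_subset_insert[THEN subsetD])
  show nm: "?mx \<noteq> []" using ne1 by simp
  have lm: "length ?mx = 2 * N" using len1 len2 by simp
  have sm: "sum_list (map h ?mx) = sum_list (map h xs1) + sum_list (map h xs2) - h (xs1 ! p) - h (xs2 ! p) + h t3 + h t4"
    for h :: "_ \<Rightarrow> real"
    using sum_list_upd_real[of p xs1 h t3] sum_list_upd_real[of p xs2 h t4] p len1 len2 by simp
  have Np: "real N > 0" using p by simp
  show "fdot \<gamma> n l g (Pof \<gamma> l ?mx) = (fdot \<gamma> n l g (Pof \<gamma> l xs1) + fdot \<gamma> n l g (Pof \<gamma> l xs2)) / 2"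
  proof -
    have e0: "fdot \<gamma> n l g (Pof \<gamma> l ?mx) = sum_list (map (Rs g l) ?mx) / length ?mx"
      using fdot_Pof[OF l nm inj] bm unfolding bnd_def by blast
    have e1: "fdot \<gamma> n l g (Pof \<gamma> l xs1) = sum_list (map (Rs g l) xs1) / length xs1"
      using fdot_Pof[OF l ne1 inj] b1 unfolding bnd_def by blast
    have e2: "fdot \<gamma> n l g (Pof \<gamma> l xs2) = sum_list (map (Rs g l) xs2) / length xs2"
      using fdot_Pof[OF l ne2 inj] b2 unfolding bnd_def by blast
    show ?thesis unfolding e0 e1 e2 lm len1 len2 sm[of "Rs g l"]
      using rev_ok_Rs[OF ro, of g] Np by (simp add: field_simps)
  qed
  show "ateL \<gamma> ?mx = (ateL \<gamma> xs1 + ateL \<gamma> xs2) / 2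
        + (kap \<gamma> t3 + kap \<gamma> t4 - kap \<gamma> (xs1 ! p) - kap \<gamma> (xs2 ! p)) / (2 * N)"
    unfolding ateL_def lm len1 len2 sm[of "kap \<gamma>"] using Np by (simp add: field_simps)
qed

definition xsL :: "nat \<Rightarrow> nat \<Rightarrow> (nat \<Rightarrow> nat) \<Rightarrow> (nat \<times> nat \<times> nat set) list" where
  "xsL n zs c = (0, 0, - {zs}) # map (\<lambda>y. (0, y, {c y})) [1..<n]"
definition fL :: "(nat \<Rightarrow> real) \<Rightarrow> nat \<Rightarrow> nat \<Rightarrow> (nat \<Rightarrow> nat) \<Rightarrow> nat \<times> nat \<times> nat \<Rightarrow> real" where
  "fL \<gamma> n zs c k = (case k of (y, d, z) \<Rightarrow> if z = zs then (if d = 1 then \<gamma> 0 - \<gamma> (n - 1) else \<gamma> 0 - \<gamma> y)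
      else (if d = 1 \<and> 1 \<le> y \<and> c y = z then \<gamma> y - \<gamma> 0 else 0))"
definition xsU :: "nat \<Rightarrow> nat \<Rightarrow> (nat \<Rightarrow> nat) \<Rightarrow> (nat \<times> nat \<times> nat set) list" where
  "xsU n zs c = (0, 0, {zs}) # map (\<lambda>y. (y, 0, - {c y})) [1..<n]"
definition fU :: "(nat \<Rightarrow> real) \<Rightarrow> nat \<Rightarrow> nat \<Rightarrow> (nat \<Rightarrow> nat) \<Rightarrow> nat \<times> nat \<times> nat \<Rightarrow> real" where
  "fU \<gamma> n zs c k = (case k of (y, d, z) \<Rightarrow> if z = zs then (if d = 1 then \<gamma> 0 - \<gamma> y else \<gamma> 0 - \<gamma> (n - 1))
      else (if d = 0 \<and> 1 \<le> y \<and> c y = z then \<gamma> y - \<gamma> 0 else 0))"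

lemma mono_le:
  fixes x y n :: nat and \<gamma> :: "nat \<Rightarrow> real"
  assumes "strict_mono_on {..<n} \<gamma>" "x \<le> y" "y < n"
  shows "\<gamma> x \<le> \<gamma> y"
proof (cases "x = y")
  case False
  then have "x < y" using assms(2) by simp
  then show ?thesis using assms by (intro less_imp_le strict_mono_onD[OF assms(1)]) auto
qed simp

lemma sum_delta_rm:
  fixes zs l cb :: nat
  assumes zs: "zs < l" and cb: "P \<longrightarrow> cb \<in> {..<l} - {zs}"
  shows "(\<Sum>z\<in>{..<l} - {zs}. if P \<and> cb = z then (r::real) else 0) = (if P then r else 0)"
proof (cases P)
  case True
  then show ?thesis using cb by (simp add: sum.delta)
qed simp

lemma sum_split_zs:
  fixes zs l :: nat
  assumes "zs < l"
  shows "(\<Sum>z<l. h z) = h zs + (\<Sum>z\<in>{..<l} - {zs}. (h z :: real))"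
  using assms by (simp add: sum.remove)

lemma len_xsL: "n \<ge> 1 \<Longrightarrow> length (xsL n zs c) = n" unfolding xsL_def by simp
lemma len_xsU: "n \<ge> 1 \<Longrightarrow> length (xsU n zs c) = n" unfolding xsU_def by simp
lemma nth_xsL: "1 \<le> y \<Longrightarrow> y < n \<Longrightarrow> xsL n zs c ! y = (0, y, {c y})" "xsL n zs c ! 0 = (0, 0, - {zs})"
  unfolding xsL_def by (auto simp: nth_Cons split: nat.split)
lemma nth_xsU: "1 \<le> y \<Longrightarrow> y < n \<Longrightarrow> xsU n zs c ! y = (y, 0, - {c y})" "xsU n zs c ! 0 = (0, 0, {zs})"
  unfolding xsU_def by (auto simp: nth_Cons split: nat.split)
lemma bnd_xsL: "n \<ge> 1 \<Longrightarrow> bnd n (xsL n zs c)" unfolding xsL_def bnd_def by auto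
lemma bnd_xsU: "n \<ge> 1 \<Longrightarrow> bnd n (xsU n zs c)" unfolding xsU_def bnd_def by auto

lemma DF_L:
  assumes mono: "strict_mono_on {..<n} \<gamma>" and zs: "zs < l" and c: "c \<in> Pi {1..<n} (\<lambda>_. {..<l} - {zs})"
  shows "\<forall>a<n. \<forall>b<n. (\<Sum>z<l. max (fL \<gamma> n zs c (b, 1, z)) (fL \<gamma> n zs c (a, 0, z))) \<le> 1 * (\<gamma> b - \<gamma> a)"
proof (intro allI impI)
  fix a b assume a: "a < n" and b: "b < n"
  have g1: "\<gamma> a \<le> \<gamma> (n - 1)" using mono a by (intro mono_le) auto
  have g2: "\<gamma> 0 \<le> \<gamma> b" using mono b by (intro mono_le) auto
  have "(\<Sum>z<l. max (fL \<gamma> n zs c (b, 1, z)) (fL \<gamma> n zs c (a, 0, z)))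
      = max (fL \<gamma> n zs c (b, 1, zs)) (fL \<gamma> n zs c (a, 0, zs)) + (\<Sum>z\<in>{..<l} - {zs}. max (fL \<gamma> n zs c (b, 1, z)) (fL \<gamma> n zs c (a, 0, z)))"
    by (rule sum_split_zs[OF zs])
  also have "max (fL \<gamma> n zs c (b, 1, zs)) (fL \<gamma> n zs c (a, 0, zs)) = \<gamma> 0 - \<gamma> a"
    using g1 by (simp add: fL_def)
  also have "(\<Sum>z\<in>{..<l} - {zs}. max (fL \<gamma> n zs c (b, 1, z)) (fL \<gamma> n zs c (a, 0, z)))
      = (\<Sum>z\<in>{..<l} - {zs}. if 1 \<le> b \<and> c b = z then \<gamma> b - \<gamma> 0 else 0)"
    using g2 by (intro sum.cong refl) (auto simp: fL_def)
  also have "\<dots> = (if 1 \<le> b then \<gamma> b - \<gamma> 0 else 0)"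
    using c b by (intro sum_delta_rm[OF zs]) auto
  finally show "(\<Sum>z<l. max (fL \<gamma> n zs c (b, 1, z)) (fL \<gamma> n zs c (a, 0, z))) \<le> 1 * (\<gamma> b - \<gamma> a)"
    using g2 by auto
qed

lemma DF_U:
  assumes mono: "strict_mono_on {..<n} \<gamma>" and zs: "zs < l" and c: "c \<in> Pi {1..<n} (\<lambda>_. {..<l} - {zs})"
  shows "\<forall>a<n. \<forall>b<n. (\<Sum>z<l. max (fU \<gamma> n zs c (b, 1, z)) (fU \<gamma> n zs c (a, 0, z))) \<le> (-1) * (\<gamma> b - \<gamma> a)"
proof (intro allI impI)
  fix a b assume a: "a < n" and b: "b < n"
  have g1: "\<gamma> b \<le> \<gamma> (n - 1)" using mono b by (intro mono_le) auto
  have g2: "\<gamma> 0 \<le> \<gamma> a" using mono a by (intro mono_le) auto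
  have "(\<Sum>z<l. max (fU \<gamma> n zs c (b, 1, z)) (fU \<gamma> n zs c (a, 0, z)))
      = max (fU \<gamma> n zs c (b, 1, zs)) (fU \<gamma> n zs c (a, 0, zs)) + (\<Sum>z\<in>{..<l} - {zs}. max (fU \<gamma> n zs c (b, 1, z)) (fU \<gamma> n zs c (a, 0, z)))"
    by (rule sum_split_zs[OF zs])
  also have "max (fU \<gamma> n zs c (b, 1, zs)) (fU \<gamma> n zs c (a, 0, zs)) = \<gamma> 0 - \<gamma> b"
    using g1 by (simp add: fU_def)
  also have "(\<Sum>z\<in>{..<l} - {zs}. max (fU \<gamma> n zs c (b, 1, z)) (fU \<gamma> n zs c (a, 0, z)))
      = (\<Sum>z\<in>{..<l} - {zs}. if 1 \<le> a \<and> c a = z then \<gamma> a - \<gamma> 0 else 0)"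
    using g2 by (intro sum.cong refl) (auto simp: fU_def)
  also have "\<dots> = (if 1 \<le> a then \<gamma> a - \<gamma> 0 else 0)"
    using c a by (intro sum_delta_rm[OF zs]) auto
  finally show "(\<Sum>z<l. max (fU \<gamma> n zs c (b, 1, z)) (fU \<gamma> n zs c (a, 0, z))) \<le> (-1) * (\<gamma> b - \<gamma> a)"
    using g2 by auto
qed

lemma tight_L:
  assumes zs: "zs < l" and c: "c \<in> Pi {1..<n} (\<lambda>_. {..<l} - {zs})" and t: "t \<in> set (xsL n zs c)"
  shows "Rs (fL \<gamma> n zs c) l t = kap \<gamma> t"
proof -
  consider "t = (0, 0, - {zs})" | y where "1 \<le> y" "y < n" "t = (0, y, {c y})"
    using t unfolding xsL_def by auto
  then show ?thesis
  proof cases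
    case 1
    have "Rs (fL \<gamma> n zs c) l t = (\<Sum>z<l. 0)"
      unfolding Rs_def 1 by (intro sum.cong refl) (auto simp: fL_def vz_def dz_def)
    then show ?thesis unfolding 1 kap_def by simp
  next
    case 2
    have cy: "c y < l" "c y \<noteq> zs" using c 2 by auto
    have "Rs (fL \<gamma> n zs c) l t = (\<Sum>z<l. if c y = z then \<gamma> y - \<gamma> 0 else 0)"
      unfolding Rs_def 2(3) using cy 2 by (intro sum.cong refl) (auto simp: fL_def vz_def dz_def)
    also have "\<dots> = \<gamma> y - \<gamma> 0" using cy by (simp add: sum.delta)
    finally show ?thesis unfolding 2(3) kap_def by simp
  qed
qed

lemma tight_U:
  assumes zs: "zs < l" and c: "c \<in> Pi {1..<n} (\<lambda>_. {..<l} - {zs})" and t: "t \<in> set (xsU n zs c)"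
  shows "Rs (fU \<gamma> n zs c) l t = - kap \<gamma> t"
proof -
  consider "t = (0, 0, {zs})" | y where "1 \<le> y" "y < n" "t = (y, 0, - {c y})"
    using t unfolding xsU_def by auto
  then show ?thesis
  proof cases
    case 1
    have "Rs (fU \<gamma> n zs c) l t = (\<Sum>z<l. 0)"
      unfolding Rs_def 1 by (intro sum.cong refl) (auto simp: fU_def vz_def dz_def)
    then show ?thesis unfolding 1 kap_def by simp
  next
    case 2
    have cy: "c y < l" "c y \<noteq> zs" using c 2 by auto
    have "Rs (fU \<gamma> n zs c) l t = (\<Sum>z<l. if c y = z then \<gamma> y - \<gamma> 0 else 0)"
      unfolding Rs_def 2(3) using cy 2 by (intro sum.cong refl) (auto simp: fU_def vz_def dz_def)
    also have "\<dots> = \<gamma> y - \<gamma> 0" using cy by (simp add: sum.delta)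
    finally show ?thesis unfolding 2(3) kap_def by simp
  qed
qed

lemma exch_L1: "zs \<noteq> zs' \<Longrightarrow> rev_ok l (0, 0, - {zs}) (0, 0, - {zs'}) (n - 1, 0, UNIV) (0, 0, - {zs, zs'})"
  by (auto simp: rev_ok_def vz_def dz_def)
lemma exch_L2: "u \<noteq> v \<Longrightarrow> rev_ok l (0, y0, {u}) (0, y0, {v}) (0, 0, {}) (0, y0, {u, v})"
  by (auto simp: rev_ok_def vz_def dz_def)
lemma exch_U1: "zs \<noteq> zs' \<Longrightarrow> rev_ok l (0, 0, {zs}) (0, 0, {zs'}) (0, n - 1, {}) (0, 0, {zs, zs'})"
  by (auto simp: rev_ok_def vz_def dz_def)
lemma exch_U2: "u \<noteq> v \<Longrightarrow> rev_ok l (y0, 0, - {u}) (y0, 0, - {v}) (0, 0, UNIV) (y0, 0, - {u, v})"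
  by (auto simp: rev_ok_def vz_def dz_def)

lemma mid_generic:
  assumes l: "l > 0" and inj: "inj_on \<gamma> {..<n}"
    and b1: "bnd n xs1" and b2: "bnd n xs2" and len1: "length xs1 = N" and len2: "length xs2 = N"
    and p: "p < N" and b34: "bnd n [t3, t4]" and ro: "rev_ok l (xs1 ! p) (xs2 ! p) t3 t4"
    and DF: "\<forall>a<n. \<forall>b<n. (\<Sum>z<l. max (f (b, 1, z)) (f (a, 0, z))) \<le> s * (\<gamma> b - \<gamma> a)"
  shows "compatible m \<gamma> n l (Pof \<gamma> l (xs1[p := t3] @ xs2[p := t4]))"
    and "\<forall>g. fdot \<gamma> n l g (Pof \<gamma> l (xs1[p := t3] @ xs2[p := t4]))
        = (fdot \<gamma> n l g (Pof \<gamma> l xs1) + fdot \<gamma> n l g (Pof \<gamma> l xs2)) / 2"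
    and "(ateL \<gamma> xs1 + ateL \<gamma> xs2) / 2 + (kap \<gamma> t3 + kap \<gamma> t4 - kap \<gamma> (xs1 ! p) - kap \<gamma> (xs2 ! p)) / (2 * N)
         \<in> ate_set m \<gamma> n l (Pof \<gamma> l (xs1[p := t3] @ xs2[p := t4]))"
    and "\<forall>x\<in>ate_set m \<gamma> n l (Pof \<gamma> l (xs1[p := t3] @ xs2[p := t4])).
           fdot \<gamma> n l f (Pof \<gamma> l (xs1[p := t3] @ xs2[p := t4])) \<le> s * x"
proof -
  let ?mx = "xs1[p := t3] @ xs2[p := t4]"
  note mf = mix_facts[OF l inj b1 b2 len1 len2 p b34 ro]
  show C: "compatible m \<gamma> n l (Pof \<gamma> l ?mx)" using point_facts(2)[OF l mf(4) mf(3)] .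
  show "\<forall>g. fdot \<gamma> n l g (Pof \<gamma> l ?mx) = (fdot \<gamma> n l g (Pof \<gamma> l xs1) + fdot \<gamma> n l g (Pof \<gamma> l xs2)) / 2"
    using mf(1) by blast
  show "(ateL \<gamma> xs1 + ateL \<gamma> xs2) / 2 + (kap \<gamma> t3 + kap \<gamma> t4 - kap \<gamma> (xs1 ! p) - kap \<gamma> (xs2 ! p)) / (2 * N)
         \<in> ate_set m \<gamma> n l (Pof \<gamma> l ?mx)"
    using point_facts(1)[OF l mf(4) mf(3), of \<gamma> m] unfolding mf(2) .
  show "\<forall>x\<in>ate_set m \<gamma> n l (Pof \<gamma> l ?mx). fdot \<gamma> n l f (Pof \<gamma> l ?mx) \<le> s * x"
  proof
    fix x assume x: "x \<in> ate_set m \<gamma> n l (Pof \<gamma> l ?mx)"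
    show "fdot \<gamma> n l f (Pof \<gamma> l ?mx) \<le> s * x"
      using C DF unfolding compatible_def by (intro valid_gen[OF x inj l]) auto
  qed
qed

lemma sum_list_neg: "sum_list (map (\<lambda>t. - (h t :: real)) xs) = - sum_list (map h xs)"
  by (induction xs) auto

definition IS :: "nat \<Rightarrow> nat \<Rightarrow> (nat \<times> (nat \<Rightarrow> nat)) set" where
  "IS n l = Sigma {..<l} (\<lambda>zs. PiE {1..<n} (\<lambda>_. {..<l} - {zs}))"

lemma card_IS: "card (IS n l) = l * (l - 1) ^ (n - 1)"
proof -
  have "card (IS n l) = (\<Sum>zs<l. card (PiE {1..<n} (\<lambda>_. {..<l} - {zs})))"
    unfolding IS_def by (intro card_SigmaI) (auto intro: finite_PiE)
  also have "\<dots> = (\<Sum>zs<l. (l - 1) ^ (n - 1))"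
    by (intro sum.cong refl) (simp add: card_PiE)
  finally show ?thesis by simp
qed

lemma IS_diff:
  assumes i: "i \<in> IS n l" and j: "j \<in> IS n l" and ne: "i \<noteq> j" and e: "fst i = fst j"
  shows "\<exists>y. y \<in> {1..<n} \<and> snd i y \<noteq> snd j y"
proof (rule ccontr)
  assume "\<not> ?thesis"
  then have "\<forall>y\<in>{1..<n}. snd i y = snd j y" by auto
  moreover have "snd i \<in> PiE {1..<n} (\<lambda>_. {..<l} - {fst i})" "snd j \<in> PiE {1..<n} (\<lambda>_. {..<l} - {fst j})"
    using i j unfolding IS_def by auto
  ultimately have "snd i = snd j" by (metis PiE_ext e)
  then show False using ne e by (simp add: prod_eq_iff)
qed

definition mixL :: "nat \<Rightarrow> nat \<times> (nat \<Rightarrow> nat) \<Rightarrow> nat \<times> (nat \<Rightarrow> nat) \<Rightarrow> (nat \<times> nat \<times> nat set) list" where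
  "mixL n i j = (if fst i \<noteq> fst j then
       (xsL n (fst i) (snd i))[0 := (n - 1, 0, UNIV)] @ (xsL n (fst j) (snd j))[0 := (0, 0, - {fst i, fst j})]
     else (let y0 = (SOME y. y \<in> {1..<n} \<and> snd i y \<noteq> snd j y) in
       (xsL n (fst i) (snd i))[y0 := (0, 0, {})] @ (xsL n (fst j) (snd j))[y0 := (0, y0, {snd i y0, snd j y0})]))"

definition mixU :: "nat \<Rightarrow> nat \<times> (nat \<Rightarrow> nat) \<Rightarrow> nat \<times> (nat \<Rightarrow> nat) \<Rightarrow> (nat \<times> nat \<times> nat set) list" where
  "mixU n i j = (if fst i \<noteq> fst j then
       (xsU n (fst i) (snd i))[0 := (0, n - 1, {})] @ (xsU n (fst j) (snd j))[0 := (0, 0, {fst i, fst j})]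
     else (let y0 = (SOME y. y \<in> {1..<n} \<and> snd i y \<noteq> snd j y) in
       (xsU n (fst i) (snd i))[y0 := (0, 0, UNIV)] @ (xsU n (fst j) (snd j))[y0 := (y0, 0, - {snd i y0, snd j y0})]))"

lemma main_lower:
  fixes m :: iv_model and \<gamma> :: "nat \<Rightarrow> real" and n l :: nat and F :: "(nat \<times> nat \<times> nat \<Rightarrow> real) set"
  assumes mono: "strict_mono_on {..<n} \<gamma>" and n2: "n \<ge> 2" and l: "l > 0"
    and finF: "finite F" and neF: "F \<noteq> {}"
    and hyp: "\<forall>P. compatible m \<gamma> n l P \<longrightarrow> lower_bound m \<gamma> n l P = Max ((\<lambda>f. fdot \<gamma> n l f P) ` F)"
  shows "card (IS n l) \<le> card F"
proof -
  have inj: "inj_on \<gamma> {..<n}" using mono by (rule strict_mono_on_imp_inj_on)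
  have n1: "n \<ge> 1" using n2 by simp
  have Iin: "fst i < l" "snd i \<in> Pi {1..<n} (\<lambda>_. {..<l} - {fst i})" if "i \<in> IS n l" for i
    using that unfolding IS_def by (auto simp: PiE_def)
  define X where "X i = xsL n (fst i) (snd i)" for i :: "nat \<times> (nat \<Rightarrow> nat)"
  define Fi where "Fi i = fL \<gamma> n (fst i) (snd i)" for i :: "nat \<times> (nat \<Rightarrow> nat)"
  define Pt where "Pt i = Pof \<gamma> l (X i)" for i
  define v where "v i = ateL \<gamma> (X i)" for i
  define Pm where "Pm i j = Pof \<gamma> l (mixL n i j)" for i j
  have Xne: "X i \<noteq> []" "bnd n (X i)" "length (X i) = n" for i
    unfolding X_def using bnd_xsL[OF n1] len_xsL[OF n1] n1 by (auto simp: xsL_def)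
  have DFi: "\<forall>a<n. \<forall>b<n. (\<Sum>z<l. max (Fi i (b, 1, z)) (Fi i (a, 0, z))) \<le> 1 * (\<gamma> b - \<gamma> a)"
    if "i \<in> IS n l" for i
    unfolding Fi_def using DF_L[OF mono Iin[OF that]] .
  have fdotX: "fdot \<gamma> n l (Fi i) (Pt i) = v i" if i: "i \<in> IS n l" for i
  proof -
    have "fdot \<gamma> n l (Fi i) (Pt i) = sum_list (map (Rs (Fi i) l) (X i)) / length (X i)"
      unfolding Pt_def using fdot_Pof[OF l Xne(1) inj] Xne(2) unfolding bnd_def by blast
    also have "map (Rs (Fi i) l) (X i) = map (kap \<gamma>) (X i)"
      unfolding Fi_def X_def using tight_L[OF Iin[OF i]] by (intro map_cong refl) auto
    finally show ?thesis unfolding v_def ateL_def .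
  qed
  have "card (IS n l) \<le> card F"
  proof (rule core_lower[where C = "compatible m \<gamma> n l" and S = "ate_set m \<gamma> n l" and \<phi> = "fdot \<gamma> n l"
        and Pt = Pt and v = v and Pm = Pm, OF finF neF])
    show "\<forall>P. compatible m \<gamma> n l P \<longrightarrow> Inf (ate_set m \<gamma> n l P) = Max ((\<lambda>g. fdot \<gamma> n l g P) ` F)"
      using hyp unfolding lower_bound_def .
    show "\<forall>P. compatible m \<gamma> n l P \<longrightarrow> ate_set m \<gamma> n l P \<noteq> {}" unfolding compatible_def by simp
    show "\<forall>i\<in>IS n l. compatible m \<gamma> n l (Pt i) \<and> (\<forall>x\<in>ate_set m \<gamma> n l (Pt i). v i \<le> x)"
    proof
      fix i assume i: "i \<in> IS n l"
      have C: "compatible m \<gamma> n l (Pt i)" unfolding Pt_def using point_facts(2)[OF l Xne(1,2)] .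
      moreover have "v i \<le> x" if x: "x \<in> ate_set m \<gamma> n l (Pt i)" for x
      proof -
        have "fdot \<gamma> n l (Fi i) (Pt i) \<le> 1 * x"
          using C DFi[OF i] unfolding compatible_def by (intro valid_gen[OF x inj l]) auto
        then show ?thesis using fdotX[OF i] by simp
      qed
      ultimately show "compatible m \<gamma> n l (Pt i) \<and> (\<forall>x\<in>ate_set m \<gamma> n l (Pt i). v i \<le> x)" by blast
    qed
    show "\<forall>i\<in>IS n l. \<forall>j\<in>IS n l. i \<noteq> j \<longrightarrow> compatible m \<gamma> n l (Pm i j)
        \<and> (\<forall>g\<in>F. fdot \<gamma> n l g (Pm i j) = (fdot \<gamma> n l g (Pt i) + fdot \<gamma> n l g (Pt j)) / 2)
        \<and> (\<exists>x\<in>ate_set m \<gamma> n l (Pm i j). x < (v i + v j) / 2) \<and> bdd_below (ate_set m \<gamma> n l (Pm i j))"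
    proof (intro ballI impI)
      fix i j assume i: "i \<in> IS n l" and j: "j \<in> IS n l" and ij: "i \<noteq> j"
      obtain p t3 t4 where p: "p < n" and b34: "bnd n [t3, t4]" and ro: "rev_ok l (X i ! p) (X j ! p) t3 t4"
        and kd: "kap \<gamma> t3 + kap \<gamma> t4 - kap \<gamma> (X i ! p) - kap \<gamma> (X j ! p) < 0"
        and mx: "mixL n i j = (X i)[p := t3] @ (X j)[p := t4]"
      proof (cases "fst i = fst j")
        case False
        have "rev_ok l (X i ! 0) (X j ! 0) (n - 1, 0, UNIV) (0, 0, - {fst i, fst j})"
          unfolding X_def nth_xsL(2) using exch_L1[OF False] .
        moreover have "\<gamma> 0 < \<gamma> (n - 1)" using mono n2 by (intro strict_mono_onD[OF mono]) auto
        ultimately show ?thesis using False n1 n2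
          by (intro that[of 0 "(n - 1, 0, UNIV)" "(0, 0, - {fst i, fst j})"])
             (auto simp: bnd_def X_def nth_xsL(2) kap_def mixL_def)
      next
        case True
        define y0 where "y0 = (SOME y. y \<in> {1..<n} \<and> snd i y \<noteq> snd j y)"
        have y0: "y0 \<in> {1..<n} \<and> snd i y0 \<noteq> snd j y0"
          unfolding y0_def using IS_diff[OF i j ij True] by (rule someI_ex)
        have "rev_ok l (X i ! y0) (X j ! y0) (0, 0, {}) (0, y0, {snd i y0, snd j y0})"
          unfolding X_def using y0 nth_xsL(1) exch_L2 by auto
        moreover have "\<gamma> 0 < \<gamma> y0" using mono y0 by (intro strict_mono_onD[OF mono]) auto
        moreover have "mixL n i j = (X i)[y0 := (0, 0, {})] @ (X j)[y0 := (0, y0, {snd i y0, snd j y0})]"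
          unfolding mixL_def Let_def y0_def[symmetric] X_def using True by simp
        ultimately show ?thesis using True y0
          by (intro that[of y0 "(0, 0, {})" "(0, y0, {snd i y0, snd j y0})"])
             (auto simp: bnd_def X_def nth_xsL(1) kap_def)
      qed
      note mg = mid_generic[OF l inj Xne(2) Xne(2) Xne(3) Xne(3) p b34 ro DFi[OF i], folded mx Pm_def]
      show "compatible m \<gamma> n l (Pm i j)
        \<and> (\<forall>g\<in>F. fdot \<gamma> n l g (Pm i j) = (fdot \<gamma> n l g (Pt i) + fdot \<gamma> n l g (Pt j)) / 2)
        \<and> (\<exists>x\<in>ate_set m \<gamma> n l (Pm i j). x < (v i + v j) / 2) \<and> bdd_below (ate_set m \<gamma> n l (Pm i j))"
      proof (intro conjI)
        show "compatible m \<gamma> n l (Pm i j)" using mg(1) .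
        show "\<forall>g\<in>F. fdot \<gamma> n l g (Pm i j) = (fdot \<gamma> n l g (Pt i) + fdot \<gamma> n l g (Pt j)) / 2"
          using mg(2) unfolding Pt_def by blast
        have "(v i + v j) / 2 + (kap \<gamma> t3 + kap \<gamma> t4 - kap \<gamma> (X i ! p) - kap \<gamma> (X j ! p)) / (2 * n) < (v i + v j) / 2"
        proof -
          have "(kap \<gamma> t3 + kap \<gamma> t4 - kap \<gamma> (X i ! p) - kap \<gamma> (X j ! p)) / (2 * n) < 0"
            using kd n1 by (intro divide_neg_pos) auto
          then show ?thesis by linarith
        qed
        then show "\<exists>x\<in>ate_set m \<gamma> n l (Pm i j). x < (v i + v j) / 2"
          using mg(3) unfolding v_def by blast
        show "bdd_below (ate_set m \<gamma> n l (Pm i j))"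
          using mg(4) by (intro bdd_belowI[where m = "fdot \<gamma> n l (Fi i) (Pm i j)"]) auto
      qed
    qed
  qed
  then show ?thesis .
qed


lemma main_upper:
  fixes m :: iv_model and \<gamma> :: "nat \<Rightarrow> real" and n l :: nat and F :: "(nat \<times> nat \<times> nat \<Rightarrow> real) set"
  assumes mono: "strict_mono_on {..<n} \<gamma>" and n2: "n \<ge> 2" and l: "l > 0"
    and finF: "finite F" and neF: "F \<noteq> {}"
    and hyp: "\<forall>P. compatible m \<gamma> n l P \<longrightarrow> upper_bound m \<gamma> n l P = Min ((\<lambda>f. fdot \<gamma> n l f P) ` F)"
  shows "card (IS n l) \<le> card F"
proof -
  have inj: "inj_on \<gamma> {..<n}" using mono by (rule strict_mono_on_imp_inj_on)
  have n1: "n \<ge> 1" using n2 by simp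
  have Iin: "fst i < l" "snd i \<in> Pi {1..<n} (\<lambda>_. {..<l} - {fst i})" if "i \<in> IS n l" for i
    using that unfolding IS_def by (auto simp: PiE_def)
  define X where "X i = xsU n (fst i) (snd i)" for i :: "nat \<times> (nat \<Rightarrow> nat)"
  define Fi where "Fi i = fU \<gamma> n (fst i) (snd i)" for i :: "nat \<times> (nat \<Rightarrow> nat)"
  define Pt where "Pt i = Pof \<gamma> l (X i)" for i
  define v where "v i = ateL \<gamma> (X i)" for i
  define Pm where "Pm i j = Pof \<gamma> l (mixU n i j)" for i j
  have Xne: "X i \<noteq> []" "bnd n (X i)" "length (X i) = n" for i
    unfolding X_def using bnd_xsU[OF n1] len_xsU[OF n1] n1 by (auto simp: xsU_def)
  have DFi: "\<forall>a<n. \<forall>b<n. (\<Sum>z<l. max (Fi i (b, 1, z)) (Fi i (a, 0, z))) \<le> (-1) * (\<gamma> b - \<gamma> a)"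
    if "i \<in> IS n l" for i
    unfolding Fi_def using DF_U[OF mono Iin[OF that]] .
  have fdotX: "fdot \<gamma> n l (Fi i) (Pt i) = - v i" if i: "i \<in> IS n l" for i
  proof -
    have "fdot \<gamma> n l (Fi i) (Pt i) = sum_list (map (Rs (Fi i) l) (X i)) / length (X i)"
      unfolding Pt_def using fdot_Pof[OF l Xne(1) inj] Xne(2) unfolding bnd_def by blast
    also have "map (Rs (Fi i) l) (X i) = map (\<lambda>t. - kap \<gamma> t) (X i)"
      unfolding Fi_def X_def using tight_U[OF Iin[OF i]] by (intro map_cong refl) auto
    also have "sum_list (map (\<lambda>t. - kap \<gamma> t) (X i)) = - sum_list (map (kap \<gamma>) (X i))"
      by (rule sum_list_neg)
    finally show ?thesis unfolding v_def ateL_def by simp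
  qed
  have "card (IS n l) \<le> card F"
  proof (rule core_upper[where C = "compatible m \<gamma> n l" and S = "ate_set m \<gamma> n l" and \<phi> = "fdot \<gamma> n l"
        and Pt = Pt and v = v and Pm = Pm, OF finF neF])
    show "\<forall>P. compatible m \<gamma> n l P \<longrightarrow> Sup (ate_set m \<gamma> n l P) = Min ((\<lambda>g. fdot \<gamma> n l g P) ` F)"
      using hyp unfolding upper_bound_def .
    show "\<forall>P. compatible m \<gamma> n l P \<longrightarrow> ate_set m \<gamma> n l P \<noteq> {}" unfolding compatible_def by simp
    show "\<forall>i\<in>IS n l. compatible m \<gamma> n l (Pt i) \<and> (\<forall>x\<in>ate_set m \<gamma> n l (Pt i). x \<le> v i)"
    proof
      fix i assume i: "i \<in> IS n l"
      have C: "compatible m \<gamma> n l (Pt i)" unfolding Pt_def using point_facts(2)[OF l Xne(1,2)] .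
      moreover have "x \<le> v i" if x: "x \<in> ate_set m \<gamma> n l (Pt i)" for x
      proof -
        have "fdot \<gamma> n l (Fi i) (Pt i) \<le> (-1) * x"
          using C DFi[OF i] unfolding compatible_def by (intro valid_gen[OF x inj l]) auto
        then show ?thesis using fdotX[OF i] by simp
      qed
      ultimately show "compatible m \<gamma> n l (Pt i) \<and> (\<forall>x\<in>ate_set m \<gamma> n l (Pt i). x \<le> v i)" by blast
    qed
    show "\<forall>i\<in>IS n l. \<forall>j\<in>IS n l. i \<noteq> j \<longrightarrow> compatible m \<gamma> n l (Pm i j)
        \<and> (\<forall>g\<in>F. fdot \<gamma> n l g (Pm i j) = (fdot \<gamma> n l g (Pt i) + fdot \<gamma> n l g (Pt j)) / 2)
        \<and> (\<exists>x\<in>ate_set m \<gamma> n l (Pm i j). x > (v i + v j) / 2) \<and> bdd_above (ate_set m \<gamma> n l (Pm i j))"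
    proof (intro ballI impI)
      fix i j assume i: "i \<in> IS n l" and j: "j \<in> IS n l" and ij: "i \<noteq> j"
      obtain p t3 t4 where p: "p < n" and b34: "bnd n [t3, t4]" and ro: "rev_ok l (X i ! p) (X j ! p) t3 t4"
        and kd: "kap \<gamma> t3 + kap \<gamma> t4 - kap \<gamma> (X i ! p) - kap \<gamma> (X j ! p) > 0"
        and mx: "mixU n i j = (X i)[p := t3] @ (X j)[p := t4]"
      proof (cases "fst i = fst j")
        case False
        have "rev_ok l (X i ! 0) (X j ! 0) (0, n - 1, {}) (0, 0, {fst i, fst j})"
          unfolding X_def nth_xsU(2) using exch_U1[OF False] .
        moreover have "\<gamma> 0 < \<gamma> (n - 1)" using mono n2 by (intro strict_mono_onD[OF mono]) auto
        ultimately show ?thesis using False n1 n2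
          by (intro that[of 0 "(0, n - 1, {})" "(0, 0, {fst i, fst j})"])
             (auto simp: bnd_def X_def nth_xsU(2) kap_def mixU_def)
      next
        case True
        define y0 where "y0 = (SOME y. y \<in> {1..<n} \<and> snd i y \<noteq> snd j y)"
        have y0: "y0 \<in> {1..<n} \<and> snd i y0 \<noteq> snd j y0"
          unfolding y0_def using IS_diff[OF i j ij True] by (rule someI_ex)
        have "rev_ok l (X i ! y0) (X j ! y0) (0, 0, UNIV) (y0, 0, - {snd i y0, snd j y0})"
          unfolding X_def using y0 nth_xsU(1) exch_U2 by auto
        moreover have "\<gamma> 0 < \<gamma> y0" using mono y0 by (intro strict_mono_onD[OF mono]) auto
        moreover have "mixU n i j = (X i)[y0 := (0, 0, UNIV)] @ (X j)[y0 := (y0, 0, - {snd i y0, snd j y0})]"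
          unfolding mixU_def Let_def y0_def[symmetric] X_def using True by simp
        ultimately show ?thesis using True y0
          by (intro that[of y0 "(0, 0, UNIV)" "(y0, 0, - {snd i y0, snd j y0})"])
             (auto simp: bnd_def X_def nth_xsU(1) kap_def)
      qed
      note mg = mid_generic[OF l inj Xne(2) Xne(2) Xne(3) Xne(3) p b34 ro DFi[OF i], folded mx Pm_def]
      show "compatible m \<gamma> n l (Pm i j)
        \<and> (\<forall>g\<in>F. fdot \<gamma> n l g (Pm i j) = (fdot \<gamma> n l g (Pt i) + fdot \<gamma> n l g (Pt j)) / 2)
        \<and> (\<exists>x\<in>ate_set m \<gamma> n l (Pm i j). x > (v i + v j) / 2) \<and> bdd_above (ate_set m \<gamma> n l (Pm i j))"
      proof (intro conjI)
        show "compatible m \<gamma> n l (Pm i j)" using mg(1) .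
        show "\<forall>g\<in>F. fdot \<gamma> n l g (Pm i j) = (fdot \<gamma> n l g (Pt i) + fdot \<gamma> n l g (Pt j)) / 2"
          using mg(2) unfolding Pt_def by blast
        have "(v i + v j) / 2 + (kap \<gamma> t3 + kap \<gamma> t4 - kap \<gamma> (X i ! p) - kap \<gamma> (X j ! p)) / (2 * n) > (v i + v j) / 2"
        proof -
          have "(kap \<gamma> t3 + kap \<gamma> t4 - kap \<gamma> (X i ! p) - kap \<gamma> (X j ! p)) / (2 * n) > 0"
            using kd n1 by (intro divide_pos_pos) auto
          then show ?thesis by linarith
        qed
        then show "\<exists>x\<in>ate_set m \<gamma> n l (Pm i j). x > (v i + v j) / 2"
          using mg(3) unfolding v_def by blast
        show "bdd_above (ate_set m \<gamma> n l (Pm i j))"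
          using mg(4) by (intro bdd_aboveI[where M = "- fdot \<gamma> n l (Fi i) (Pm i j)"]) force
      qed
    qed
  qed
  then show ?thesis .
qed

theorem corollary2:
  fixes m :: iv_model and \<gamma> :: "nat \<Rightarrow> real" and n l :: nat
    and F :: "(nat \<times> nat \<times> nat \<Rightarrow> real) set"
  assumes "strict_mono_on {..<n} \<gamma>"
    and "finite F" and "F \<noteq> {}" and "F \<subseteq> coord_space n l"
    and "(\<forall>P. compatible m \<gamma> n l P \<longrightarrow>
             lower_bound m \<gamma> n l P = Max ((\<lambda>f. fdot \<gamma> n l f P) ` F))
       \<or> (\<forall>P. compatible m \<gamma> n l P \<longrightarrow>
             upper_bound m \<gamma> n l P = Min ((\<lambda>f. fdot \<gamma> n l f P) ` F))"
  shows "int (card F) \<ge> int l * ((int l - 1) ^ (n - 1) - (int l - 1))"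
proof -
  have c1: "card F \<ge> 1" using assms(2,3) by (simp add: Suc_le_eq card_gt_0_iff)
  show ?thesis
  proof (cases "n \<ge> 2 \<and> l > 0")
    case True
    then have n2: "n \<ge> 2" and l: "l > 0" by auto
    have "card (IS n l) \<le> card F"
      using assms(5)
    proof
      assume h: "\<forall>P. compatible m \<gamma> n l P \<longrightarrow> lower_bound m \<gamma> n l P = Max ((\<lambda>f. fdot \<gamma> n l f P) ` F)"
      show ?thesis by (rule main_lower[OF assms(1) n2 l assms(2,3) h])
    next
      assume h: "\<forall>P. compatible m \<gamma> n l P \<longrightarrow> upper_bound m \<gamma> n l P = Min ((\<lambda>f. fdot \<gamma> n l f P) ` F)"
      show ?thesis by (rule main_upper[OF assms(1) n2 l assms(2,3) h])
    qed
    then have A: "int (l * (l - 1) ^ (n - 1)) \<le> int (card F)" unfolding card_IS by (simp only: of_nat_le_iff)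
    have e: "int (l * (l - 1) ^ (n - 1)) = int l * (int l - 1) ^ (n - 1)"
      using l by (simp add: of_nat_diff)
    have A': "int l * (int l - 1) ^ (n - 1) \<le> int (card F)" using A unfolding e .
    have nn: "int l * (int l - 1) \<ge> 0" using l by simp
    have "int l * ((int l - 1) ^ (n - 1) - (int l - 1)) = int l * (int l - 1) ^ (n - 1) - int l * (int l - 1)"
      by (simp add: right_diff_distrib)
    then show ?thesis using A' nn by linarith
  next
    case False
    then consider "l = 0" | "n \<le> 1" by linarith
    then show ?thesis
    proof cases
      case 1
      then show ?thesis by simp
    next
      case 2
      then have "n - 1 = 0" by simp
      then have "int l * ((int l - 1) ^ (n - 1) - (int l - 1)) = 1 - (int l - 1)^2"
        by (simp add: power2_eq_square algebra_simps)
      also have "\<dots> \<le> 1" by simp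
      also have "1 \<le> int (card F)" using c1 by simp
      finally show ?thesis .
    qed
  qed
qed


end
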